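(* The assignments \[ q^{1/2}\mapsto q^{1/2},\ z_{1,1}\mapsto t_4,\ z_{1,2}\mapsto t_4^{-1},\ z_{2,1}\mapsto t_1,\ z_{2,2}\mapsto t_1^{-1},\ z_a\mapsto t_3,\ z_b\mapsto t_2, \] \[ w_1\mapsto X,\ w_2\mapsto X^{-1},\ D_1D_2^{-1}\mapsto q^{-4}X^{-4}\varpi^2 \] determine a well defined injective $\mathbb{C}$-algebra homomorphism $\mathcal D_{q,\mathbf z}^{\mathbb{C}^*}/(z_{k,1}z_{k,2}-1,\,w_1w_2-1)\hookrightarrow\mathrm{End}\,\mathbb{C}_{q,\mathbf t}(X)$.
   Context: $\mathcal D^0_{q,\mathbf z}$ is the $\mathbb{C}[q^{\pm1/2},z_{k,l}^{\pm1},z_a^{\pm1},z_b^{\pm1}]$-algebra ($k,l\in\{1,2\}$) generated by $w_1^{\pm1},w_2^{\pm1},D_1^{\pm1},D_2^{\pm1}$ with relations $[D_r,D_s]=[w_r,w_s]=0$ and $D_rw_s=q^{2\delta_{rs}}w_sD_r$; $\mathcal D_{q,\mathbf z}$ is its localization at the multiplicative set generated by $w_r-q^\mu w_s$ ($\mu\in\mathbb Z$, $r\neq s$) and $1-q^\mu$ ($\mu\in\mathbb Z\setminus\{0\}$). $\mathbb{C}^*$ acts by simultaneously rescaling $D_1,D_2$, and $\mathcal D_{q,\mathbf z}^{\mathbb{C}^*}$ is the invariant subalgebra (total degree $0$ in the $D_r$); the quotient is by the ideal generated by $z_{1,1}z_{1,2}-1$, $z_{2,1}z_{2,2}-1$,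 $w_1w_2-1$. $\mathbb{C}_{q,\mathbf t}=\mathbb{C}(q^{1/2},t_1,\dots,t_4)$, and $\mathrm{End}\,\mathbb{C}_{q,\mathbf t}(X)$ is the algebra of $\mathbb{C}$-linear endomorphisms of the field $\mathbb{C}_{q,\mathbf t}(X)$, in which elements of $\mathbb{C}_{q,\mathbf t}(X)$ act by multiplication and $(\varpi f)(X)=f(qX)$. *)

theory Defs
  imports Complex_Main "HOL-Library.Poly_Mapping" "HOL-Computational_Algebra.Fraction_Field"
          "HOL-Algebra.QuotRing"
begin

text \<open>Variables of the source algebra: DS stands for q^(1/2); the z's; w1, w2.\<close>
datatype dvar = DS | Z11 | Z12 | Z21 | Z22 | Za | Zb | W1 | W2

fun dvar_rank :: "dvar \<Rightarrow> nat" where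
  "dvar_rank DS = 0" | "dvar_rank Z11 = 1" | "dvar_rank Z12 = 2" | "dvar_rank Z21 = 3"
| "dvar_rank Z22 = 4" | "dvar_rank Za = 5" | "dvar_rank Zb = 6" | "dvar_rank W1 = 7"
| "dvar_rank W2 = 8"

instantiation dvar :: linorder
begin
definition "less_eq_dvar x y = (dvar_rank x \<le> dvar_rank y)"
definition "less_dvar x y = (dvar_rank x < dvar_rank y)"
instance proof
  fix x y :: dvar
  assume "x \<le> y" "y \<le> x"
  then show "x = y" unfolding less_eq_dvar_def by (cases x; cases y) auto
qed (auto simp: less_eq_dvar_def less_dvar_def)
end

text \<open>Variables of the target field C(q^(1/2), t1, ..., t4, X): TS stands for q^(1/2).\<close>
datatype tvar = TS | T1 | T2 | T3 | T4 | TX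

fun tvar_rank :: "tvar \<Rightarrow> nat" where
  "tvar_rank TS = 0" | "tvar_rank T1 = 1" | "tvar_rank T2 = 2" | "tvar_rank T3 = 3"
| "tvar_rank T4 = 4" | "tvar_rank TX = 5"

instantiation tvar :: linorder
begin
definition "less_eq_tvar x y = (tvar_rank x \<le> tvar_rank y)"
definition "less_tvar x y = (tvar_rank x < tvar_rank y)"
instance proof
  fix x y :: tvar
  assume "x \<le> y" "y \<le> x"
  then show "x = y" unfolding less_eq_tvar_def by (cases x; cases y) auto
qed (auto simp: less_eq_tvar_def less_tvar_def)
end

text \<open>Complex Laurent polynomials in the variables of type 'v (group algebra of the
  free abelian group on 'v), and their fraction field.\<close>
type_synonym 'v laurent = "('v \<Rightarrow>\<^sub>0 int) \<Rightarrow>\<^sub>0 complex"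
type_synonym 'v ratfun = "'v laurent fract"

definition lmono :: "('v \<Rightarrow>\<^sub>0 int) \<Rightarrow> 'v laurent" where
  "lmono e = Poly_Mapping.single e 1"

definition lvar :: "'v \<Rightarrow> 'v laurent" where
  "lvar v = lmono (Poly_Mapping.single v 1)"

definition lconst :: "complex \<Rightarrow> 'v laurent" where
  "lconst c = Poly_Mapping.single 0 c"

definition rvar :: "'v::linorder \<Rightarrow> 'v ratfun" where
  "rvar v = Fract (lvar v) 1"

definition rconst :: "complex \<Rightarrow> 'v::linorder ratfun" where
  "rconst c = Fract (lconst c) 1"

definition fract_ext :: "('a::idom \<Rightarrow> 'a) \<Rightarrow> 'a fract \<Rightarrow> 'a fract" where
  "fract_ext f r = (SOME r'. \<exists>a b. b \<noteq> 0 \<and> r = Fract a b \<and> r' = Fract (f a) (f b))"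

type_synonym Dfield = "dvar ratfun"

text \<open>q^mu = (q^(1/2))^(2 mu) as a Laurent monomial.\<close>
definition qpowD :: "int \<Rightarrow> dvar laurent" where
  "qpowD \<mu> = lmono (Poly_Mapping.single DS (2 * \<mu>))"

definition Sgens :: "dvar laurent set" where
  "Sgens = {lvar W1 - qpowD \<mu> * lvar W2 | \<mu>. True}
         \<union> {lvar W2 - qpowD \<mu> * lvar W1 | \<mu>. True}
         \<union> {1 - qpowD \<mu> | \<mu>. \<mu> \<noteq> 0}"

definition Smult :: "dvar laurent set" where
  "Smult = {prod_list xs | xs. set xs \<subseteq> Sgens}"

text \<open>Commutative part of the localized algebra: S^{-1} C[q^(+-1/2), z^(+-1), w^(+-1)],
  realized inside the fraction field.\<close>
definition KS :: "Dfield set" where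
  "KS = {Fract a b | a b. b \<in> Smult}"

text \<open>The automorphism g(w1,w2) \<mapsto> g(q^(2 d1) w1, q^(2 d2) w2), so that
  D^d g = sigma_d(g) D^d where D^d = D1^d1 D2^d2.\<close>
definition sigmaL :: "int \<times> int \<Rightarrow> dvar laurent \<Rightarrow> dvar laurent" where
  "sigmaL d p = Abs_poly_mapping (\<lambda>e. Poly_Mapping.lookup p
      (e - Poly_Mapping.single DS (4 * fst d * Poly_Mapping.lookup e W1
                                   + 4 * snd d * Poly_Mapping.lookup e W2)))"

definition sigmaF :: "int \<times> int \<Rightarrow> Dfield \<Rightarrow> Dfield" where
  "sigmaF d = fract_ext (sigmaL d)"

text \<open>D_{q,z}: elements sum_d f_d D1^d1 D2^d2 (normal form, coefficients on the left)
  with f_d in KS, finitely many nonzero; multiplication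
  (f D^d)(g D^d') = f sigma_d(g) D^(d+d').\<close>
definition Dcar :: "(int \<times> int \<Rightarrow> Dfield) set" where
  "Dcar = {P. finite {d. P d \<noteq> 0} \<and> (\<forall>d. P d \<in> KS)}"

definition Dmult :: "(int \<times> int \<Rightarrow> Dfield) \<Rightarrow> (int \<times> int \<Rightarrow> Dfield) \<Rightarrow> (int \<times> int \<Rightarrow> Dfield)" where
  "Dmult P Q = (\<lambda>n. \<Sum>d\<in>{d. P d \<noteq> 0}. P d * sigmaF d (Q (fst n - fst d, snd n - snd d)))"

definition Dring :: "(int \<times> int \<Rightarrow> Dfield) ring" where
  "Dring = \<lparr>carrier = Dcar, mult = Dmult, one = (\<lambda>d. if d = (0, 0) then 1 else 0),
            zero = (\<lambda>d. 0), add = (\<lambda>P Q d. P d + Q d)\<rparr>"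

definition Cact :: "complex \<Rightarrow> (int \<times> int \<Rightarrow> Dfield) \<Rightarrow> (int \<times> int \<Rightarrow> Dfield)" where
  "Cact c P = (\<lambda>d. rconst c powi (fst d + snd d) * P d)"

definition Dinv :: "(int \<times> int \<Rightarrow> Dfield) ring" where
  "Dinv = Dring\<lparr>carrier := {P \<in> Dcar. \<forall>c. c \<noteq> 0 \<longrightarrow> Cact c P = P}\<rparr>"

definition deg0 :: "Dfield \<Rightarrow> (int \<times> int \<Rightarrow> Dfield)" where
  "deg0 a = (\<lambda>d. if d = (0, 0) then a else 0)"

definition Eop :: "int \<times> int \<Rightarrow> Dfield" where
  "Eop = (\<lambda>d. if d = (1, -1) then 1 else 0)"

definition Jideal :: "(int \<times> int \<Rightarrow> Dfield) set" where
  "Jideal = genideal Dinv {deg0 (rvar Z11 * rvar Z12 - 1), deg0 (rvar Z21 * rvar Z22 - 1),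
                           deg0 (rvar W1 * rvar W2 - 1)}"

definition Qring :: "(int \<times> int \<Rightarrow> Dfield) set ring" where
  "Qring = Dinv Quot Jideal"

definition cls :: "(int \<times> int \<Rightarrow> Dfield) \<Rightarrow> (int \<times> int \<Rightarrow> Dfield) set" where
  "cls x = Jideal +>\<^bsub>Dinv\<^esub> x"

type_synonym Tfield = "tvar ratfun"

text \<open>Substitution X \<mapsto> q X, q = (q^(1/2))^2, on Laurent polynomials.\<close>
definition shiftL :: "tvar laurent \<Rightarrow> tvar laurent" where
  "shiftL p = Abs_poly_mapping (\<lambda>e. Poly_Mapping.lookup p
      (e - Poly_Mapping.single TS (2 * Poly_Mapping.lookup e TX)))"

definition varpi :: "Tfield \<Rightarrow> Tfield" where
  "varpi = fract_ext shiftL"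

definition EndT :: "(Tfield \<Rightarrow> Tfield) ring" where
  "EndT = \<lparr>carrier = {f. (\<forall>a b. f (a + b) = f a + f b)
                         \<and> (\<forall>c a. f (rconst c * a) = rconst c * f a)},
           mult = (\<circ>), one = id, zero = (\<lambda>a. 0), add = (\<lambda>f g a. f a + g a)\<rparr>"

definition mulop :: "Tfield \<Rightarrow> (Tfield \<Rightarrow> Tfield)" where
  "mulop u = (\<lambda>f. u * f)"

definition assignment :: "((int \<times> int \<Rightarrow> Dfield) set \<Rightarrow> (Tfield \<Rightarrow> Tfield)) \<Rightarrow> bool" where
  "assignment \<phi> \<longleftrightarrow>
     (\<forall>c. \<phi> (cls (deg0 (rconst c))) = mulop (rconst c))
   \<and> \<phi> (cls (deg0 (rvar DS))) = mulop (rvar TS)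
   \<and> \<phi> (cls (deg0 (rvar Z11))) = mulop (rvar T4)
   \<and> \<phi> (cls (deg0 (rvar Z12))) = mulop (inverse (rvar T4))
   \<and> \<phi> (cls (deg0 (rvar Z21))) = mulop (rvar T1)
   \<and> \<phi> (cls (deg0 (rvar Z22))) = mulop (inverse (rvar T1))
   \<and> \<phi> (cls (deg0 (rvar Za))) = mulop (rvar T3)
   \<and> \<phi> (cls (deg0 (rvar Zb))) = mulop (rvar T2)
   \<and> \<phi> (cls (deg0 (rvar W1))) = mulop (rvar TX)
   \<and> \<phi> (cls (deg0 (rvar W2))) = mulop (inverse (rvar TX))
   \<and> \<phi> (cls Eop) = (\<lambda>f. rvar TS powi (-8) * rvar TX powi (-4) * varpi (varpi f))"

end

theory Submission
  imports Defs "HOL-Library.Product_Plus"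
begin


abbreviation "lk \<equiv> Poly_Mapping.lookup"
abbreviation "kys \<equiv> Poly_Mapping.keys"
abbreviation "sng \<equiv> Poly_Mapping.single"

definition Lmap :: "(('a \<Rightarrow>\<^sub>0 int) \<Rightarrow> ('b \<Rightarrow>\<^sub>0 int)) \<Rightarrow> 'a laurent \<Rightarrow> 'b laurent" where
  "Lmap \<kappa> p = (\<Sum>e\<in>kys p. sng (\<kappa> e) (lk p e))"

lemma Lmap_superset:
  assumes "finite A" "kys p \<subseteq> A"
  shows "Lmap \<kappa> p = (\<Sum>e\<in>A. sng (\<kappa> e) (lk p e))"
  unfolding Lmap_def
  by (rule sum.mono_neutral_left) (use assms in \<open>auto simp: in_keys_iff\<close>)

lemma Lmap_add: "Lmap \<kappa> (p + q) = Lmap \<kappa> p + Lmap \<kappa> q"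
proof -
  let ?A = "kys p \<union> kys q"
  have "Lmap \<kappa> (p + q) = (\<Sum>e\<in>?A. sng (\<kappa> e) (lk (p+q) e))"
    by (rule Lmap_superset) (auto simp: keys_add)
  also have "\<dots> = (\<Sum>e\<in>?A. sng (\<kappa> e) (lk p e))
                + (\<Sum>e\<in>?A. sng (\<kappa> e) (lk q e))"
    by (simp add: lookup_add single_add sum.distrib)
  also have "\<dots> = Lmap \<kappa> p + Lmap \<kappa> q"
    by (simp add: Lmap_superset[symmetric])
  finally show ?thesis .
qed

lemma Lmap_zero [simp]: "Lmap \<kappa> 0 = 0"
  by (simp add: Lmap_def)

lemma Lmap_single [simp]: "Lmap \<kappa> (sng e c) = sng (\<kappa> e) c"
  by (cases "c = 0") (simp_all add: Lmap_def)

lemma Lmap_uminus: "Lmap \<kappa> (- p) = - Lmap \<kappa> p"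
  using Lmap_add[of \<kappa> p "-p"] by (simp add: eq_neg_iff_add_eq_0 add.commute)

lemma Lmap_diff: "Lmap \<kappa> (p - q) = Lmap \<kappa> p - Lmap \<kappa> q"
  using Lmap_add[of \<kappa> p "-q"] by (simp add: Lmap_uminus)

lemma Lmap_sum: "Lmap \<kappa> (sum f S) = (\<Sum>x\<in>S. Lmap \<kappa> (f x))"
  by (induction S rule: infinite_finite_induct) (simp_all add: Lmap_add)

lemma laurent_repr: "p = (\<Sum>e\<in>kys p. sng e (lk p e))"
  by (rule poly_mapping_eqI)
     (auto simp: lookup_sum lookup_single when_def in_keys_iff
           intro: sum.neutral elim!: sum.delta' [THEN trans])

lemma Lmap_mult:
  assumes add: "\<And>a b. \<kappa> (a + b) = \<kappa> a + \<kappa> b"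
  shows "Lmap \<kappa> (p * q) = Lmap \<kappa> p * Lmap \<kappa> q"
proof -
  have pq: "p * q = (\<Sum>e\<in>kys p. \<Sum>e'\<in>kys q. sng (e + e') (lk p e * lk q e'))"
    by (subst laurent_repr[of p], subst laurent_repr[of q]) (simp add: sum_product mult_single)
  have "Lmap \<kappa> (p * q) = (\<Sum>e\<in>kys p. \<Sum>e'\<in>kys q. sng (\<kappa> e + \<kappa> e') (lk p e * lk q e'))"
    by (simp add: pq Lmap_sum add)
  also have "\<dots> = Lmap \<kappa> p * Lmap \<kappa> q"
    by (simp add: Lmap_def sum_product mult_single)
  finally show ?thesis .
qed

lemma Lmap_one:
  assumes "\<kappa> 0 = 0" shows "Lmap \<kappa> 1 = 1"
proof -
  have "(1 :: 'a laurent) = sng 0 1" by simp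
  then show ?thesis using assms by (metis Lmap_single single_one)
qed

lemma Lmap_comp: "Lmap \<kappa> (Lmap \<kappa>' p) = Lmap (\<kappa> \<circ> \<kappa>') p"
  by (simp add: Lmap_def[of \<kappa>'] Lmap_sum) (simp add: Lmap_def)

lemma Lmap_id: "Lmap id p = p"
  by (simp add: Lmap_def laurent_repr[symmetric])

lemma lookup_Lmap: "lk (Lmap \<kappa> p) x = (\<Sum>e\<in>kys p. if \<kappa> e = x then lk p e else 0)"
  by (simp add: Lmap_def lookup_sum lookup_single when_def)

lemma lookup_Lmap_inv:
  assumes "\<And>e'. \<kappa> e' = e \<longleftrightarrow> e' = g"
  shows "lk (Lmap \<kappa> p) e = lk p g"
  unfolding lookup_Lmap assms by (simp add: in_keys_iff)

lemma lookup_Lmap_inj: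
  assumes "inj \<kappa>" shows "lk (Lmap \<kappa> p) (\<kappa> e) = lk p e"
  by (rule lookup_Lmap_inv) (use assms in \<open>auto dest: injD\<close>)

lemma Lmap_eq_Abs:
  assumes "\<And>e e'. \<kappa> e' = e \<longleftrightarrow> e' = g e"
  shows "Abs_poly_mapping (\<lambda>e. lk p (g e)) = Lmap \<kappa> p"
proof -
  have "(\<lambda>e. lk p (g e)) = lk (Lmap \<kappa> p)"
    using lookup_Lmap_inv[OF assms] by auto
  then show ?thesis by (simp add: lookup_inverse)
qed



definition lhom :: "('a::idom \<Rightarrow> 'b::idom) \<Rightarrow> bool" where
  "lhom f \<longleftrightarrow> (\<forall>a b. f (a + b) = f a + f b) \<and> (\<forall>a b. f (a * b) = f a * f b) \<and> f 1 = 1"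

lemma lhomD:
  assumes "lhom f"
  shows "f (a + b) = f a + f b" "f (a * b) = f a * f b" "f 1 = 1" "f 0 = 0"
        "f (- a) = - f a" "f (a - b) = f a - f b"
proof -
  show 1: "f (a + b) = f a + f b" "f (a * b) = f a * f b" "f 1 = 1"
    using assms by (auto simp: lhom_def)
  have "f (0 + 0) = f 0 + f 0" using assms unfolding lhom_def by blast
  then have "f 0 = f 0 + f 0" by (simp only: add_0)
  then show 0: "f 0 = 0" by (metis add_cancel_right_right)
  have neg: "f (- x) = - f x" for x
  proof -
    have "f (x + - x) = f x + f (- x)" using assms unfolding lhom_def by blast
    then show ?thesis using 0 by (simp add: eq_neg_iff_add_eq_0 add.commute)
  qed
  then show "f (- a) = - f a" .
  have "f (a + - b) = f a + f (- b)" using assms unfolding lhom_def by blast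
  then show "f (a - b) = f a - f b" using neg by simp
qed

lemma lhom_Lmap:
  assumes "\<And>a b. \<kappa> (a + b) = \<kappa> a + \<kappa> b"
  shows "lhom (Lmap \<kappa>)"
proof -
  have "\<kappa> 0 = 0" using assms[of 0 0] by simp
  then show ?thesis unfolding lhom_def using Lmap_add Lmap_mult[OF assms] Lmap_one by blast
qed


lemma lhom_comp: "lhom f \<Longrightarrow> lhom g \<Longrightarrow> lhom (f \<circ> g)"
  by (auto simp: lhom_def)

definition fextR :: "('a::idom \<Rightarrow> 'b::idom) \<Rightarrow> 'a fract \<Rightarrow> 'b fract" where
  "fextR f r = (SOME r'. \<exists>a b. b \<noteq> 0 \<and> f b \<noteq> 0 \<and> r = Fract a b \<and> r' = Fract (f a) (f b))"

definition fdom :: "('a::idom \<Rightarrow> 'b::idom) \<Rightarrow> 'a fract set" where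
  "fdom f = {Fract a b | a b. b \<noteq> 0 \<and> f b \<noteq> 0}"

lemma fextR_Fract:
  assumes h: "lhom f" and b: "b \<noteq> 0" "f b \<noteq> 0"
  shows "fextR f (Fract a b) = Fract (f a) (f b)"
proof -
  let ?P = "\<lambda>r'. \<exists>a' b'. b' \<noteq> 0 \<and> f b' \<noteq> 0 \<and> Fract a b = Fract a' b' \<and> r' = Fract (f a') (f b')"
  have "?P (Fract (f a) (f b))" using b by blast
  then have "?P (fextR f (Fract a b))" unfolding fextR_def by (rule someI)
  then obtain a' b' where ab': "b' \<noteq> 0" "f b' \<noteq> 0" "Fract a b = Fract a' b'"
    "fextR f (Fract a b) = Fract (f a') (f b')" by blast
  then have "a * b' = a' * b" using b by (simp add: eq_fract)
  then have "f (a * b') = f (a' * b)" by simp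
  then have "f a * f b' = f a' * f b" by (simp add: lhomD(2)[OF h])
  then show ?thesis using ab' b by (simp add: eq_fract)
qed


lemma fdomI: "b \<noteq> 0 \<Longrightarrow> f b \<noteq> 0 \<Longrightarrow> Fract a b \<in> fdom f"
  by (auto simp: fdom_def)

lemma fdomE:
  assumes "x \<in> fdom f"
  obtains a b where "b \<noteq> 0" "f b \<noteq> 0" "x = Fract a b"
  using assms by (auto simp: fdom_def)

lemma fdom_add:
  assumes h: "lhom f" and "x \<in> fdom f" "y \<in> fdom f"
  shows "x + y \<in> fdom f" "fextR f (x + y) = fextR f x + fextR f y"
proof -
  obtain a b where ab: "b \<noteq> 0" "f b \<noteq> 0" "x = Fract a b" using assms(2) by (rule fdomE)
  obtain c d where cd: "d \<noteq> 0" "f d \<noteq> 0" "y = Fract c d" using assms(3) by (rule fdomE)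
  have e: "x + y = Fract (a * d + c * b) (b * d)" using ab cd by simp
  have n: "b * d \<noteq> 0" "f (b * d) \<noteq> 0" using ab cd lhomD[OF h] by auto
  show "x + y \<in> fdom f" using e n by (simp add: fdomI)
  show "fextR f (x + y) = fextR f x + fextR f y"
    using ab cd n by (simp add: e fextR_Fract[OF h] lhomD[OF h])
qed

lemma fdom_mult:
  assumes h: "lhom f" and "x \<in> fdom f" "y \<in> fdom f"
  shows "x * y \<in> fdom f" "fextR f (x * y) = fextR f x * fextR f y"
proof -
  obtain a b where ab: "b \<noteq> 0" "f b \<noteq> 0" "x = Fract a b" using assms(2) by (rule fdomE)
  obtain c d where cd: "d \<noteq> 0" "f d \<noteq> 0" "y = Fract c d" using assms(3) by (rule fdomE)
  have e: "x * y = Fract (a * c) (b * d)" using ab cd by simp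
  have n: "b * d \<noteq> 0" "f (b * d) \<noteq> 0" using ab cd lhomD[OF h] by auto
  show "x * y \<in> fdom f" using e n by (simp add: fdomI)
  show "fextR f (x * y) = fextR f x * fextR f y"
    using ab cd n by (simp add: e fextR_Fract[OF h] lhomD[OF h])
qed

lemma fdom_uminus:
  assumes h: "lhom f" and "x \<in> fdom f"
  shows "- x \<in> fdom f" "fextR f (- x) = - fextR f x"
proof -
  obtain a b where ab: "b \<noteq> 0" "f b \<noteq> 0" "x = Fract a b" using assms(2) by (rule fdomE)
  show "- x \<in> fdom f" using ab by (simp add: fdomI)
  show "fextR f (- x) = - fextR f x" using ab by (simp add: fextR_Fract[OF h] lhomD[OF h])
qed

lemma fdom_Fract1: "lhom f \<Longrightarrow> Fract a 1 \<in> fdom f"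
  by (rule fdomI) (auto simp: lhomD)

lemma fextR_Fract1: "lhom f \<Longrightarrow> fextR f (Fract a 1) = Fract (f a) 1"
  by (simp add: fextR_Fract lhomD)

lemma fdom_zero: "lhom f \<Longrightarrow> 0 \<in> fdom f" and fdom_one: "lhom f \<Longrightarrow> 1 \<in> fdom f"
  using fdom_Fract1[of f 0] fdom_Fract1[of f 1] by (simp_all add: Zero_fract_def One_fract_def)

lemma fextR_zero: "lhom f \<Longrightarrow> fextR f 0 = 0" and fextR_one: "lhom f \<Longrightarrow> fextR f 1 = 1"
  using fextR_Fract1[of f 0] fextR_Fract1[of f 1] by (simp_all add: Zero_fract_def One_fract_def lhomD)

lemma fract_ext_eq:
  assumes h: "lhom f" and inj: "\<And>b. b \<noteq> 0 \<Longrightarrow> f b \<noteq> 0"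
  shows "fract_ext f = fextR f"
proof -
  have "(\<lambda>r'. \<exists>a b. b \<noteq> 0 \<and> r = Fract a b \<and> r' = Fract (f a) (f b)) =
        (\<lambda>r'. \<exists>a b. b \<noteq> 0 \<and> f b \<noteq> 0 \<and> r = Fract a b \<and> r' = Fract (f a) (f b))" for r
    using inj by blast
  then show ?thesis unfolding fract_ext_def fextR_def by (simp add: fun_eq_iff)
qed

lemma fdom_inj:
  assumes h: "lhom f" and inj: "\<And>b. b \<noteq> 0 \<Longrightarrow> f b \<noteq> 0"
  shows "fdom f = UNIV"
proof -
  have "x \<in> fdom f" for x
    by (cases x rule: Fract_cases) (use inj in \<open>auto intro: fdomI\<close>)
  then show ?thesis by auto
qed

lemma fext_comp:
  assumes "lhom f" "lhom g" "\<And>b. b \<noteq> 0 \<Longrightarrow> f b \<noteq> 0" "\<And>b. b \<noteq> 0 \<Longrightarrow> g b \<noteq> 0"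
  shows "fract_ext f (fract_ext g x) = fract_ext (f \<circ> g) x"
proof -
  have c: "lhom (f \<circ> g)" using assms by (simp add: lhom_comp)
  show ?thesis
  proof (cases x rule: Fract_cases)
    case (Fract a b)
    then show ?thesis using assms c
      by (simp add: fract_ext_eq fextR_Fract)
  qed
qed



type_synonym dexp = "dvar \<Rightarrow>\<^sub>0 int"
type_synonym texp = "tvar \<Rightarrow>\<^sub>0 int"

definition tauD :: "int \<times> int \<Rightarrow> dexp \<Rightarrow> dexp" where
  "tauD d e = e + sng DS (4 * fst d * lk e W1 + 4 * snd d * lk e W2)"

definition shK :: "int \<Rightarrow> texp \<Rightarrow> texp" where
  "shK k e = e + sng TS (2 * k * lk e TX)"

definition kap :: "dexp \<Rightarrow> texp" where
  "kap e = sng TS (lk e DS) + sng T4 (lk e Z11 - lk e Z12) + sng T1 (lk e Z21 - lk e Z22)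
         + sng T3 (lk e Za) + sng T2 (lk e Zb) + sng TX (lk e W1 - lk e W2)"

definition rho :: "dexp \<Rightarrow> dexp" where
  "rho e = e - sng Z11 (lk e Z12) - sng Z12 (lk e Z12) - sng Z21 (lk e Z22) - sng Z22 (lk e Z22)
             - sng W1 (lk e W2) - sng W2 (lk e W2)"

lemma lk_tauD: "lk (tauD d e) v = lk e v + (if v = DS then 4 * fst d * lk e W1 + 4 * snd d * lk e W2 else 0)"
  by (simp add: tauD_def lookup_add lookup_single when_def)

lemma lk_shK: "lk (shK k e) v = lk e v + (if v = TS then 2 * k * lk e TX else 0)"
  by (simp add: shK_def lookup_add lookup_single when_def)

lemma lk_kap:
  "lk (kap e) v = (case v of TS \<Rightarrow> lk e DS | T4 \<Rightarrow> lk e Z11 - lk e Z12 | T1 \<Rightarrow> lk e Z21 - lk e Z22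
     | T3 \<Rightarrow> lk e Za | T2 \<Rightarrow> lk e Zb | TX \<Rightarrow> lk e W1 - lk e W2)"
  by (cases v) (simp_all add: kap_def lookup_add lookup_single when_def)

lemma lk_rho:
  "lk (rho e) v = (case v of Z11 \<Rightarrow> lk e Z11 - lk e Z12 | Z12 \<Rightarrow> 0 | Z21 \<Rightarrow> lk e Z21 - lk e Z22
     | Z22 \<Rightarrow> 0 | W1 \<Rightarrow> lk e W1 - lk e W2 | W2 \<Rightarrow> 0 | _ \<Rightarrow> lk e v)"
  by (cases v) (simp_all add: rho_def lookup_add lookup_minus lookup_single when_def)

lemma tauD_add: "tauD d (a + b) = tauD d a + tauD d b"
  by (rule poly_mapping_eqI) (simp add: lk_tauD lookup_add algebra_simps)

lemma shK_add: "shK k (a + b) = shK k a + shK k b"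
  by (rule poly_mapping_eqI) (simp add: lk_shK lookup_add algebra_simps)

lemma kap_add: "kap (a + b) = kap a + kap b"
  by (rule poly_mapping_eqI) (simp add: lk_kap lookup_add algebra_simps split: tvar.split)

lemma rho_add: "rho (a + b) = rho a + rho b"
  by (rule poly_mapping_eqI) (simp add: lk_rho lookup_add algebra_simps split: dvar.split)

lemma tauD_comp: "tauD d (tauD d' e) = tauD (d + d') e"
  by (rule poly_mapping_eqI) (simp add: lk_tauD algebra_simps)

lemma shK_comp: "shK k (shK m e) = shK (k + m) e"
  by (rule poly_mapping_eqI) (simp add: lk_shK algebra_simps)

lemma tauD_0: "tauD 0 e = e"
  by (rule poly_mapping_eqI) (simp add: lk_tauD)

lemma shK_0: "shK 0 e = e"
  by (rule poly_mapping_eqI) (simp add: lk_shK)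

lemma kap_tauD: "kap (tauD (n, - n) e) = shK (2 * n) (kap e)"
  by (rule poly_mapping_eqI) (simp add: lk_kap lk_shK lk_tauD algebra_simps split: tvar.split)

lemma kap_rho: "kap (rho e) = kap e"
  by (rule poly_mapping_eqI) (simp add: lk_kap lk_rho split: tvar.split)

lemma rho_rho: "rho (rho e) = rho e"
  by (rule poly_mapping_eqI) (simp add: lk_rho split: dvar.split)

lemma kap_inj_rho:
  assumes "kap (rho a) = kap (rho b)"
  shows "rho a = rho b"
proof (rule poly_mapping_eqI)
  fix v
  have "\<And>w. lk (kap (rho a)) w = lk (kap (rho b)) w" using assms by simp
  from this[of TS] this[of T4] this[of T1] this[of T3] this[of T2] this[of TX]
  show "lk (rho a) v = lk (rho b) v"
    by (cases v) (simp_all add: lk_kap lk_rho)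
qed

abbreviation "sigL d \<equiv> Lmap (tauD d)"
abbreviation "shL k \<equiv> Lmap (shK k)"
abbreviation "evL \<equiv> Lmap kap"
abbreviation "rhoL \<equiv> Lmap rho"

lemma lhom_sigL: "lhom (sigL d)" by (rule lhom_Lmap) (rule tauD_add)
lemma lhom_shL: "lhom (shL k)" by (rule lhom_Lmap) (rule shK_add)
lemma lhom_evL: "lhom evL" by (rule lhom_Lmap) (rule kap_add)
lemma lhom_rhoL: "lhom rhoL" by (rule lhom_Lmap) (rule rho_add)

lemma sigL_comp: "sigL d (sigL d' p) = sigL (d + d') p"
  by (simp add: Lmap_comp o_def tauD_comp)

lemma shL_comp: "shL k (shL m p) = shL (k + m) p"
  by (simp add: Lmap_comp o_def shK_comp)

lemma sigL_0: "sigL 0 p = p"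
proof -
  have "tauD 0 = id" by (rule ext) (simp add: tauD_0)
  then show ?thesis by (simp add: Lmap_id)
qed

lemma shL_0: "shL 0 p = p"
proof -
  have "shK 0 = id" by (rule ext) (simp add: shK_0)
  then show ?thesis by (simp add: Lmap_id)
qed

lemma sigL_inj: "b \<noteq> 0 \<Longrightarrow> sigL d b \<noteq> 0"
  using sigL_comp[of "-d" d b] by (auto simp: sigL_0)

lemma shL_inj: "b \<noteq> 0 \<Longrightarrow> shL k b \<noteq> 0"
  using shL_comp[of "-k" k b] by (auto simp: shL_0)

lemma evL_sigL: "evL (sigL (n, -n) p) = shL (2 * n) (evL p)"
  by (simp add: Lmap_comp o_def kap_tauD)

lemma sigmaL_eq: "sigmaL d = sigL d"
proof
  fix p
  show "sigmaL d p = sigL d p"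
    unfolding sigmaL_def
  proof (rule Lmap_eq_Abs)
    fix e e'
    show "tauD d e' = e \<longleftrightarrow> e' = e - sng DS (4 * fst d * lk e W1 + 4 * snd d * lk e W2)"
    proof
      assume "tauD d e' = e"
      then have "lk e W1 = lk e' W1" "lk e W2 = lk e' W2"
        by (auto simp: lk_tauD)
      then show "e' = e - sng DS (4 * fst d * lk e W1 + 4 * snd d * lk e W2)"
        using \<open>tauD d e' = e\<close> by (auto simp: tauD_def)
    next
      assume "e' = e - sng DS (4 * fst d * lk e W1 + 4 * snd d * lk e W2)"
      then show "tauD d e' = e"
        by (intro poly_mapping_eqI) (simp add: lk_tauD lookup_minus lookup_single when_def)
    qed
  qed
qed

lemma shiftL_eq: "shiftL = shL 1"
proof
  fix p
  show "shiftL p = shL 1 p"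
    unfolding shiftL_def
  proof (rule Lmap_eq_Abs)
    fix e e'
    show "shK 1 e' = e \<longleftrightarrow> e' = e - sng TS (2 * lk e TX)"
    proof
      assume "shK 1 e' = e"
      then have "lk e TX = lk e' TX"
        by (auto simp: lk_shK)
      then show "e' = e - sng TS (2 * lk e TX)"
        using \<open>shK 1 e' = e\<close> by (auto simp: shK_def)
    next
      assume "e' = e - sng TS (2 * lk e TX)"
      then show "shK 1 e' = e"
        by (intro poly_mapping_eqI) (simp add: lk_shK lookup_minus lookup_single when_def)
    qed
  qed
qed



lemma lhom_hom_simps:
  assumes "lhom f"
  shows "f (a + b) = f a + f b" "f (a * b) = f a * f b" "f 1 = 1" "f 0 = 0"
        "f (- a) = - f a" "f (a - b) = f a - f b"
  using lhomD[OF assms] by auto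

lemma sigmaF_eq: "sigmaF d = fextR (sigL d)"
  unfolding sigmaF_def sigmaL_eq by (rule fract_ext_eq[OF lhom_sigL sigL_inj])

lemma fdom_sigL: "fdom (sigL d) = UNIV"
  by (rule fdom_inj[OF lhom_sigL sigL_inj])

lemma sigmaF_Fract: "b \<noteq> 0 \<Longrightarrow> sigmaF d (Fract a b) = Fract (sigL d a) (sigL d b)"
  by (simp add: sigmaF_eq fextR_Fract lhom_sigL sigL_inj)

lemma sigmaF_add: "sigmaF d (x + y) = sigmaF d x + sigmaF d y"
  using fdom_add(2)[OF lhom_sigL, of x d y] by (simp add: sigmaF_eq fdom_sigL)

lemma sigmaF_mult: "sigmaF d (x * y) = sigmaF d x * sigmaF d y"
  using fdom_mult(2)[OF lhom_sigL, of x d y] by (simp add: sigmaF_eq fdom_sigL)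

lemma sigmaF_uminus: "sigmaF d (- x) = - sigmaF d x"
  using fdom_uminus(2)[OF lhom_sigL, of x d] by (simp add: sigmaF_eq fdom_sigL)

lemma sigmaF_zero: "sigmaF d 0 = 0" and sigmaF_one: "sigmaF d 1 = 1"
  by (simp_all add: sigmaF_eq fextR_zero fextR_one lhom_sigL)

lemma sigmaF_diff: "sigmaF d (x - y) = sigmaF d x - sigmaF d y"
  using sigmaF_add[of d x "- y"] by (simp add: sigmaF_uminus)

lemma sigmaF_sum: "sigmaF d (sum f S) = (\<Sum>x\<in>S. sigmaF d (f x))"
  by (induction S rule: infinite_finite_induct) (simp_all add: sigmaF_add sigmaF_zero)

lemma sigmaF_comp: "sigmaF d (sigmaF d' x) = sigmaF (d + d') x"
proof (cases x rule: Fract_cases)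
  case (Fract a b)
  then show ?thesis by (simp add: sigmaF_Fract sigL_inj sigL_comp)
qed

lemma sigmaF_0: "sigmaF 0 x = x"
proof (cases x rule: Fract_cases)
  case (Fract a b)
  then show ?thesis by (simp add: sigmaF_Fract sigL_0)
qed

definition Wk :: "int \<Rightarrow> Tfield \<Rightarrow> Tfield" where
  "Wk k = fextR (shL k)"

lemma fdom_shL: "fdom (shL k) = UNIV"
  by (rule fdom_inj[OF lhom_shL shL_inj])

lemma varpi_eq: "varpi = Wk 1"
  unfolding varpi_def Wk_def shiftL_eq by (rule fract_ext_eq[OF lhom_shL shL_inj])

lemma Wk_Fract: "b \<noteq> 0 \<Longrightarrow> Wk k (Fract a b) = Fract (shL k a) (shL k b)"
  by (simp add: Wk_def fextR_Fract lhom_shL shL_inj)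

lemma Wk_add: "Wk k (x + y) = Wk k x + Wk k y"
  using fdom_add(2)[OF lhom_shL, of x k y] by (simp add: Wk_def fdom_shL)

lemma Wk_mult: "Wk k (x * y) = Wk k x * Wk k y"
  using fdom_mult(2)[OF lhom_shL, of x k y] by (simp add: Wk_def fdom_shL)

lemma Wk_zero: "Wk k 0 = 0" and Wk_one: "Wk k 1 = 1"
  by (simp_all add: Wk_def fextR_zero fextR_one lhom_shL)

lemma Wk_comp: "Wk k (Wk m x) = Wk (k + m) x"
proof (cases x rule: Fract_cases)
  case (Fract a b)
  then show ?thesis by (simp add: Wk_Fract shL_inj shL_comp)
qed

lemma Wk_0: "Wk 0 x = x"
proof (cases x rule: Fract_cases)
  case (Fract a b)
  then show ?thesis by (simp add: Wk_Fract shL_0)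
qed

lemma Wk_sum: "Wk k (sum f S) = (\<Sum>x\<in>S. Wk k (f x))"
  by (induction S rule: infinite_finite_induct) (simp_all add: Wk_add Wk_zero)

definition evF :: "Dfield \<Rightarrow> Tfield" where
  "evF = fextR evL"

lemma evF_Fract: "b \<noteq> 0 \<Longrightarrow> evL b \<noteq> 0 \<Longrightarrow> evF (Fract a b) = Fract (evL a) (evL b)"
  by (simp add: evF_def fextR_Fract lhom_evL)

lemma evF_sigmaF:
  assumes "x \<in> fdom evL"
  shows "sigmaF (n, -n) x \<in> fdom evL" "evF (sigmaF (n, -n) x) = Wk (2 * n) (evF x)"
proof -
  obtain a b where ab: "b \<noteq> 0" "evL b \<noteq> 0" "x = Fract a b" using assms by (rule fdomE)
  have s: "sigmaF (n, -n) x = Fract (sigL (n, -n) a) (sigL (n, -n) b)"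
    using ab by (simp add: sigmaF_Fract)
  have n: "sigL (n, -n) b \<noteq> 0" "evL (sigL (n, -n) b) \<noteq> 0"
    using ab by (simp_all add: sigL_inj evL_sigL shL_inj)
  show "sigmaF (n, -n) x \<in> fdom evL" using s n by (simp add: fdomI)
  show "evF (sigmaF (n, -n) x) = Wk (2 * n) (evF x)"
    using s n ab by (simp add: evF_Fract Wk_Fract evL_sigL)
qed

lemma sng_eq0 [simp]: "sng e c = 0 \<longleftrightarrow> c = 0"
  by (metis lookup_single_eq lookup_zero single_zero)

lemma sng_key_inj: "sng a (1::'b::zero_neq_one) = sng b 1 \<Longrightarrow> a = b"
  by (metis lookup_single_eq lookup_single_not_eq zero_neq_one)

definition tm :: "texp \<Rightarrow> Tfield" where
  "tm e = Fract (sng e 1) 1"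

lemma tm_add: "tm (a + b) = tm a * tm b"
  by (simp add: tm_def mult_single)

lemma tm_0: "tm 0 = 1"
  by (simp add: tm_def One_fract_def)

lemma tm_nz: "tm e \<noteq> 0"
  by (simp add: tm_def Zero_fract_def eq_fract)

lemma tm_uminus: "tm (- e) = inverse (tm e)"
  using tm_add[of e "- e"] tm_nz[of e] by (simp add: tm_0 field_simps)

lemma tm_inj: "tm a = tm b \<Longrightarrow> a = b"
  by (simp add: tm_def eq_fract sng_key_inj)

lemma tm_pow: "tm (sng v a) ^ n = tm (sng v (int n * a))"
  by (induction n) (simp_all add: tm_0 tm_add[symmetric] single_add[symmetric] algebra_simps)

lemma tm_powi: "tm (sng v a) powi k = tm (sng v (k * a))"
proof (cases "k \<ge> 0")
  case True
  then show ?thesis using tm_pow[of v a "nat k"] by (simp add: power_int_def)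
next
  case False
  have "tm (sng v a) powi k = inverse (tm (sng v a) ^ nat (- k))"
    using False by (simp add: power_int_def power_inverse)
  also have "\<dots> = inverse (tm (sng v (int (nat (-k)) * a)))" by (simp only: tm_pow)
  also have "\<dots> = tm (- sng v (int (nat (-k)) * a))" by (simp only: tm_uminus)
  also have "\<dots> = tm (sng v (- (int (nat (-k)) * a)))" by (simp only: single_uminus)
  also have "\<dots> = tm (sng v (k * a))" using False by simp
  finally show ?thesis .
qed

lemma rvar_tm: "rvar v = tm (sng v 1)"
  by (simp add: rvar_def lvar_def lmono_def tm_def)

lemma Wk_tm: "Wk k (tm e) = tm (shK k e)"
  by (simp add: tm_def Wk_Fract lhom_hom_simps[OF lhom_shL])

lemma evF_Fract1: "evF (Fract a 1) = Fract (evL a) 1"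
  by (simp add: evF_def fextR_Fract1 lhom_evL)

lemma rconst_Fract: "rconst c = Fract (sng 0 c) 1"
  by (simp add: rconst_def lconst_def)

lemma Wk_rconst: "Wk k (rconst c) = rconst c"
proof -
  have "shK k 0 = 0" by (simp add: shK_def)
  then show ?thesis by (simp add: rconst_Fract Wk_Fract lhom_hom_simps[OF lhom_shL])
qed

lemma rconst_mult_tm: "rconst c * tm e = Fract (sng e c) 1"
  by (simp add: rconst_Fract tm_def mult_single)



lemma lvar_sng: "lvar v = sng (sng v 1) 1"
  by (simp add: lvar_def lmono_def)

lemma qpowD_sng: "qpowD m = sng (sng DS (2 * m)) 1"
  by (simp add: qpowD_def lmono_def)

lemma sng_diff_nz:
  assumes "a \<noteq> b" shows "sng a (1::complex) - sng b 1 \<noteq> 0"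
proof
  assume "sng a (1::complex) - sng b 1 = 0"
  then have "lk (sng a (1::complex) - sng b 1) a = 0" by simp
  then show False using assms by (simp add: lookup_minus lookup_single)
qed

lemma Smult_mult: "b \<in> Smult \<Longrightarrow> b' \<in> Smult \<Longrightarrow> b * b' \<in> Smult"
proof -
  assume "b \<in> Smult" "b' \<in> Smult"
  then obtain xs ys where "set xs \<subseteq> Sgens" "b = prod_list xs" "set ys \<subseteq> Sgens" "b' = prod_list ys"
    by (auto simp: Smult_def)
  then have "set (xs @ ys) \<subseteq> Sgens" "b * b' = prod_list (xs @ ys)" by auto
  then show ?thesis unfolding Smult_def by blast
qed

lemma Smult_one: "1 \<in> Smult"
  unfolding Smult_def by (auto intro!: exI[of _ "[]"])

lemma Sgens_Smult: "s \<in> Sgens \<Longrightarrow> s \<in> Smult"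
  unfolding Smult_def by (auto intro!: exI[of _ "[s]"])

lemma Sgens_ev: "s \<in> Sgens \<Longrightarrow> evL s \<noteq> 0"
proof -
  have k1: "kap (sng W1 1) \<noteq> kap (sng DS (2 * m) + sng W2 1)" for m
  proof
    assume "kap (sng W1 1) = kap (sng DS (2 * m) + sng W2 1)"
    then have "lk (kap (sng W1 1)) TX = lk (kap (sng DS (2 * m) + sng W2 1)) TX" by simp
    then show False by (simp add: lk_kap lookup_add lookup_single)
  qed
  have k2: "kap (sng W2 1) \<noteq> kap (sng DS (2 * m) + sng W1 1)" for m
  proof
    assume "kap (sng W2 1) = kap (sng DS (2 * m) + sng W1 1)"
    then have "lk (kap (sng W2 1)) TX = lk (kap (sng DS (2 * m) + sng W1 1)) TX" by simp
    then show False by (simp add: lk_kap lookup_add lookup_single)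
  qed
  have k3: "kap 0 \<noteq> kap (sng DS (2 * m))" if "m \<noteq> 0" for m
  proof
    assume "kap 0 = kap (sng DS (2 * m))"
    then have "lk (kap 0) TS = lk (kap (sng DS (2 * m))) TS" by simp
    then show False using that by (simp add: lk_kap lookup_single)
  qed
  assume "s \<in> Sgens"
  then consider (a) m where "s = lvar W1 - qpowD m * lvar W2"
    | (b) m where "s = lvar W2 - qpowD m * lvar W1" | (c) m where "m \<noteq> 0" "s = 1 - qpowD m"
    unfolding Sgens_def by blast
  then show ?thesis
  proof cases
    case (a m)
    have "evL s = sng (kap (sng W1 1)) 1 - sng (kap (sng DS (2 * m) + sng W2 1)) 1"
      unfolding a by (simp add: lvar_sng qpowD_sng mult_single Lmap_diff)
    then show ?thesis using sng_diff_nz[OF k1[of m]] by simp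
  next
    case (b m)
    have "evL s = sng (kap (sng W2 1)) 1 - sng (kap (sng DS (2 * m) + sng W1 1)) 1"
      unfolding b by (simp add: lvar_sng qpowD_sng mult_single Lmap_diff)
    then show ?thesis using sng_diff_nz[OF k2[of m]] by simp
  next
    case (c m)
    have "kap 0 = 0" by (simp add: kap_def)
    then have "evL s = sng (kap 0) 1 - sng (kap (sng DS (2 * m))) 1"
      unfolding c by (simp add: qpowD_sng Lmap_diff lhom_hom_simps[OF lhom_evL])
    then show ?thesis using sng_diff_nz[OF k3[OF c(1)]] by simp
  qed
qed

lemma evL_prod_list: "evL (prod_list xs) = prod_list (map evL xs)"
  by (induction xs) (simp_all add: lhom_hom_simps[OF lhom_evL])

lemma Smult_ev: "b \<in> Smult \<Longrightarrow> evL b \<noteq> 0"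
proof -
  assume "b \<in> Smult"
  then obtain xs where xs: "set xs \<subseteq> Sgens" "b = prod_list xs" by (auto simp: Smult_def)
  have "prod_list (map evL xs) \<noteq> 0" using xs(1)
    by (induction xs) (auto dest: Sgens_ev)
  then show ?thesis using xs by (simp add: evL_prod_list)
qed

lemma Smult_nz: "b \<in> Smult \<Longrightarrow> b \<noteq> 0"
  using Smult_ev lhom_hom_simps(4)[OF lhom_evL] by metis

lemma sng_DS_merge: "sng v a + (sng v b + w) = sng v (a + b) + (w :: 'a \<Rightarrow>\<^sub>0 int)"
  by (simp add: single_add add.assoc)

lemma sigL_gen:
  assumes "s \<in> Sgens"
  shows "\<exists>e s'. s' \<in> Smult \<and> sigL d s = sng e 1 * s'"
proof -
  have t1: "tauD d (sng W1 1) = sng DS (4 * fst d) + sng W1 1"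
    by (rule poly_mapping_eqI) (simp add: lk_tauD lookup_add lookup_single when_def)
  have t2: "tauD d (sng W2 1) = sng DS (4 * snd d) + sng W2 1"
    by (rule poly_mapping_eqI) (simp add: lk_tauD lookup_add lookup_single when_def)
  have t3: "tauD d (sng DS (2 * m) + sng W2 1) = sng DS (2 * m + 4 * snd d) + sng W2 1" for m
    by (rule poly_mapping_eqI) (simp add: lk_tauD lookup_add lookup_single when_def)
  have t4: "tauD d (sng DS (2 * m) + sng W1 1) = sng DS (2 * m + 4 * fst d) + sng W1 1" for m
    by (rule poly_mapping_eqI) (simp add: lk_tauD lookup_add lookup_single when_def)
  have t5: "tauD d (sng DS k) = sng DS k" for k
    by (rule poly_mapping_eqI) (simp add: lk_tauD lookup_add lookup_single when_def)
  have t0: "tauD d 0 = 0" by (simp add: tauD_def)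
  have e1: "sng DS (4 * fst d) + (sng DS (2 * (m + 2 * snd d - 2 * fst d)) + sng W2 1)
      = sng DS (2 * m + 4 * snd d) + sng W2 1" for m
    by (rule poly_mapping_eqI) (simp add: lookup_add lookup_single when_def)
  have e2: "sng DS (4 * snd d) + (sng DS (2 * (m + 2 * fst d - 2 * snd d)) + sng W1 1)
      = sng DS (2 * m + 4 * fst d) + sng W1 1" for m
    by (rule poly_mapping_eqI) (simp add: lookup_add lookup_single when_def)
  from assms consider (a) m where "s = lvar W1 - qpowD m * lvar W2"
    | (b) m where "s = lvar W2 - qpowD m * lvar W1" | (c) m where "m \<noteq> 0" "s = 1 - qpowD m"
    unfolding Sgens_def by blast
  then show ?thesis
  proof cases
    case (a m)
    let ?s' = "lvar W1 - qpowD (m + 2 * snd d - 2 * fst d) * lvar W2"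
    have "?s' \<in> Smult" by (rule Sgens_Smult) (auto simp: Sgens_def)
    moreover have "sigL d s = sng (sng DS (4 * fst d)) 1 * ?s'"
      unfolding a
      by (simp add: lvar_sng qpowD_sng mult_single Lmap_diff t1 t3 right_diff_distrib sng_DS_merge)
    ultimately show ?thesis by blast
  next
    case (b m)
    let ?s' = "lvar W2 - qpowD (m + 2 * fst d - 2 * snd d) * lvar W1"
    have "?s' \<in> Smult" by (rule Sgens_Smult) (auto simp: Sgens_def)
    moreover have "sigL d s = sng (sng DS (4 * snd d)) 1 * ?s'"
      unfolding b
      by (simp add: lvar_sng qpowD_sng mult_single Lmap_diff t2 t4 right_diff_distrib sng_DS_merge)
    ultimately show ?thesis by blast
  next
    case (c m)
    have "s \<in> Smult" using assms by (rule Sgens_Smult)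
    moreover have "sigL d s = sng 0 1 * s"
      unfolding c
      by (simp add: qpowD_sng Lmap_diff t5 t0 flip: single_one)
    ultimately show ?thesis by blast
  qed
qed

lemma sigL_Smult:
  assumes "b \<in> Smult"
  shows "\<exists>e b'. b' \<in> Smult \<and> sigL d b = sng e 1 * b'"
proof -
  obtain xs where xs: "set xs \<subseteq> Sgens" "b = prod_list xs" using assms by (auto simp: Smult_def)
  have "\<exists>e b'. b' \<in> Smult \<and> sigL d (prod_list xs) = sng e 1 * b'" using xs(1)
  proof (induction xs)
    case Nil
    have "sigL d (prod_list []) = sng 0 1 * 1" by (simp add: lhom_hom_simps[OF lhom_sigL])
    then show ?case using Smult_one by blast
  next
    case (Cons x xs)
    then obtain e b' where 1: "b' \<in> Smult" "sigL d (prod_list xs) = sng e 1 * b'" by auto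
    have "x \<in> Sgens" using Cons.prems by simp
    then obtain e' s' where 2: "s' \<in> Smult" "sigL d x = sng e' 1 * s'" using sigL_gen by blast
    have "sigL d (prod_list (x # xs)) = (sng e' 1 * s') * (sng e 1 * b')"
      using 1 2 by (simp add: lhom_hom_simps[OF lhom_sigL])
    also have "\<dots> = (sng e' 1 * sng e 1) * (s' * b')" by (simp add: ac_simps)
    also have "\<dots> = sng (e' + e) 1 * (s' * b')" by (simp add: mult_single)
    finally have "sigL d (prod_list (x # xs)) = sng (e' + e) 1 * (s' * b')" .
    then show ?case using 1 2 Smult_mult by blast
  qed
  then show ?thesis using xs by simp
qed

lemma KSI: "b \<in> Smult \<Longrightarrow> Fract a b \<in> KS"
  by (auto simp: KS_def)

lemma KSE:
  assumes "x \<in> KS" obtains a b where "b \<in> Smult" "x = Fract a b"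
  using assms by (auto simp: KS_def)

lemma KS_add: "x \<in> KS \<Longrightarrow> y \<in> KS \<Longrightarrow> x + y \<in> KS"
  by (auto elim!: KSE simp: Smult_nz intro!: KSI Smult_mult)

lemma KS_mult: "x \<in> KS \<Longrightarrow> y \<in> KS \<Longrightarrow> x * y \<in> KS"
  by (auto elim!: KSE simp: Smult_nz intro!: KSI Smult_mult)

lemma KS_uminus: "x \<in> KS \<Longrightarrow> - x \<in> KS"
proof -
  assume "x \<in> KS"
  then obtain a b where "b \<in> Smult" "x = Fract a b" by (rule KSE)
  then have "- x = Fract (- a) b" by simp
  then show ?thesis using \<open>b \<in> Smult\<close> by (simp add: KSI)
qed

lemma KS_Fract1: "Fract a 1 \<in> KS"
  by (rule KSI[OF Smult_one])

lemma KS_zero: "0 \<in> KS" and KS_one: "1 \<in> KS"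
  using KS_Fract1[of 0] KS_Fract1[of 1] by (simp_all add: Zero_fract_def One_fract_def)

lemma KS_diff: "x \<in> KS \<Longrightarrow> y \<in> KS \<Longrightarrow> x - y \<in> KS"
  using KS_add[of x "- y"] KS_uminus[of y] by simp

lemma KS_sum: "(\<And>x. x \<in> S \<Longrightarrow> f x \<in> KS) \<Longrightarrow> sum f S \<in> KS"
  by (induction S rule: infinite_finite_induct) (auto simp: KS_zero KS_add)

lemma KS_fdom: "x \<in> KS \<Longrightarrow> x \<in> fdom evL"
proof -
  assume "x \<in> KS"
  then obtain a b where "b \<in> Smult" "x = Fract a b" by (rule KSE)
  then show ?thesis by (simp add: fdomI Smult_nz Smult_ev)
qed

lemma KS_sigma:
  assumes "x \<in> KS" shows "sigmaF d x \<in> KS"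
proof -
  obtain a b where ab: "b \<in> Smult" "x = Fract a b" using assms by (rule KSE)
  obtain e b' where eb: "b' \<in> Smult" "sigL d b = sng e 1 * b'" using sigL_Smult[OF ab(1)] by blast
  have "sigmaF d x = Fract (sigL d a) (sng e 1 * b')"
    using ab eb by (simp add: sigmaF_Fract Smult_nz)
  also have "\<dots> = Fract (sigL d a * sng (- e) 1) b'"
  proof -
    have "sng (- e) (1::complex) * sng e 1 = 1" by (simp add: mult_single)
    then show ?thesis using eb Smult_nz[OF eb(1)] by (simp add: eq_fract algebra_simps)
  qed
  finally show ?thesis using eb by (simp add: KSI)
qed



definition supp :: "(int \<times> int \<Rightarrow> Dfield) \<Rightarrow> (int \<times> int) set" where
  "supp P = {d. P d \<noteq> 0}"

lemma pair_diff: "(fst n - fst d, snd n - snd d) = n - (d :: int \<times> int)"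
  by (simp add: prod_eq_iff)

lemma Dmult_eq: "Dmult P Q n = (\<Sum>d\<in>supp P. P d * sigmaF d (Q (n - d)))"
  by (simp add: Dmult_def supp_def pair_diff)

lemma Dmult_superset:
  assumes "finite A" "supp P \<subseteq> A"
  shows "Dmult P Q n = (\<Sum>d\<in>A. P d * sigmaF d (Q (n - d)))"
  unfolding Dmult_eq
  by (rule sum.mono_neutral_left) (use assms in \<open>auto simp: supp_def\<close>)

definition psum :: "(int \<times> int) set \<Rightarrow> (int \<times> int) set \<Rightarrow> (int \<times> int) set" where
  "psum A B = (\<lambda>(a, b). a + b) ` (A \<times> B)"

lemma finite_psum: "finite A \<Longrightarrow> finite B \<Longrightarrow> finite (psum A B)"
  by (simp add: psum_def)

lemma psumI: "a \<in> A \<Longrightarrow> b \<in> B \<Longrightarrow> a + b \<in> psum A B"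
  unfolding psum_def by force

lemma supp_Dmult:
  assumes "finite (supp P)"
  shows "supp (Dmult P Q) \<subseteq> psum (supp P) (supp Q)"
proof
  fix n assume n: "n \<in> supp (Dmult P Q)"
  show "n \<in> psum (supp P) (supp Q)"
  proof (rule ccontr)
    assume nn: "n \<notin> psum (supp P) (supp Q)"
    have "P d * sigmaF d (Q (n - d)) = 0" if "d \<in> supp P" for d
    proof -
      have "Q (n - d) = 0"
      proof (rule ccontr)
        assume "Q (n - d) \<noteq> 0"
        then have "d + (n - d) \<in> psum (supp P) (supp Q)"
          using that by (intro psumI) (auto simp: supp_def)
        then show False using nn by simp
      qed
      then show ?thesis by (simp add: sigmaF_zero)
    qed
    then have "Dmult P Q n = 0" unfolding Dmult_eq by (intro sum.neutral) blast
    then show False using n by (simp add: supp_def)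
  qed
qed

lemma Dcar_iff: "P \<in> Dcar \<longleftrightarrow> finite (supp P) \<and> (\<forall>d. P d \<in> KS)"
  by (simp add: Dcar_def supp_def)

lemma Dmult_closed:
  assumes "P \<in> Dcar" "Q \<in> Dcar"
  shows "Dmult P Q \<in> Dcar"
proof -
  have f: "finite (supp P)" "finite (supp Q)" using assms by (auto simp: Dcar_iff)
  have "finite (supp (Dmult P Q))"
    using supp_Dmult[OF f(1)] finite_psum[OF f] by (rule finite_subset)
  moreover have kP: "\<And>d. P d \<in> KS" "\<And>d. Q d \<in> KS" using assms unfolding Dcar_def by blast+
  moreover have "Dmult P Q n \<in> KS" for n
    unfolding Dmult_eq by (intro KS_sum KS_mult KS_sigma kP)
  ultimately show ?thesis by (simp add: Dcar_iff)
qed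

lemma Dmult_assoc:
  assumes P: "P \<in> Dcar" and Q: "Q \<in> Dcar" and R: "R \<in> Dcar"
  shows "Dmult (Dmult P Q) R = Dmult P (Dmult Q R)"
proof
  fix n
  define A where "A = supp P"
  define B where "B = supp Q"
  define C where "C = psum A B"
  have fA: "finite A" and fB: "finite B" using P Q by (auto simp: Dcar_iff A_def B_def)
  have fC: "finite C" using fA fB by (simp add: C_def finite_psum)
  have sPQ: "supp (Dmult P Q) \<subseteq> C" using supp_Dmult fA by (simp add: A_def B_def C_def)
  have "Dmult (Dmult P Q) R n = (\<Sum>e\<in>C. Dmult P Q e * sigmaF e (R (n - e)))"
    by (rule Dmult_superset[OF fC sPQ])
  also have "\<dots> = (\<Sum>e\<in>C. \<Sum>d\<in>A. P d * sigmaF d (Q (e - d)) * sigmaF e (R (n - e)))"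
    by (simp add: Dmult_superset[OF fA] A_def sum_distrib_right)
  also have "\<dots> = (\<Sum>d\<in>A. \<Sum>e\<in>C. P d * sigmaF d (Q (e - d)) * sigmaF e (R (n - e)))"
    by (rule sum.swap)
  also have "\<dots> = (\<Sum>d\<in>A. \<Sum>e'\<in>B. P d * (sigmaF d (Q e') * sigmaF (d + e') (R (n - d - e'))))"
  proof (rule sum.cong[OF refl])
    fix d assume d: "d \<in> A"
    have sub: "(\<lambda>e'. d + e') ` B \<subseteq> C" using d by (auto simp: C_def intro: psumI)
    have "(\<Sum>e\<in>C. P d * sigmaF d (Q (e - d)) * sigmaF e (R (n - e)))
        = (\<Sum>e\<in>(\<lambda>e'. d + e') ` B. P d * sigmaF d (Q (e - d)) * sigmaF e (R (n - e)))"
    proof (rule sum.mono_neutral_right[OF fC sub], rule ballI)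
      fix e assume "e \<in> C - (\<lambda>e'. d + e') ` B"
      then have "e - d \<notin> B" by (metis DiffD2 add.commute diff_add_cancel image_eqI)
      then have "Q (e - d) = 0" by (simp add: B_def supp_def)
      then show "P d * sigmaF d (Q (e - d)) * sigmaF e (R (n - e)) = 0" by (simp add: sigmaF_zero)
    qed
    also have "\<dots> = (\<Sum>e'\<in>B. P d * sigmaF d (Q e') * sigmaF (d + e') (R (n - (d + e'))))"
      by (subst sum.reindex) (auto simp: inj_on_def)
    also have "\<dots> = (\<Sum>e'\<in>B. P d * (sigmaF d (Q e') * sigmaF (d + e') (R (n - d - e'))))"
      by (simp add: diff_diff_eq mult.assoc)
    finally show "(\<Sum>e\<in>C. P d * sigmaF d (Q (e - d)) * sigmaF e (R (n - e)))
        = (\<Sum>e'\<in>B. P d * (sigmaF d (Q e') * sigmaF (d + e') (R (n - d - e'))))" .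
  qed
  also have "\<dots> = (\<Sum>d\<in>A. P d * sigmaF d (Dmult Q R (n - d)))"
    by (simp add: Dmult_superset[OF fB] B_def sigmaF_sum sigmaF_mult sigmaF_comp sum_distrib_left)
  also have "\<dots> = Dmult P (Dmult Q R) n"
    by (simp add: Dmult_superset[OF fA] A_def)
  finally show "Dmult (Dmult P Q) R n = Dmult P (Dmult Q R) n" .
qed

definition Done :: "int \<times> int \<Rightarrow> Dfield" where
  "Done = (\<lambda>d. if d = (0, 0) then 1 else 0)"

lemma supp_Done: "supp Done = {0}"
  by (auto simp: supp_def Done_def zero_prod_def)

lemma Dmult_one_left: "Dmult Done P = P"
proof
  fix n show "Dmult Done P n = P n"
    by (simp add: Dmult_eq supp_Done) (simp add: Done_def zero_prod_def[symmetric] sigmaF_0)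
qed

lemma Dmult_one_right:
  assumes "P \<in> Dcar" shows "Dmult P Done = P"
proof
  fix n
  have f: "finite (supp P)" using assms by (simp add: Dcar_iff)
  have "Dmult P Done n = (\<Sum>d\<in>supp P. if d = n then P d else 0)"
    unfolding Dmult_eq
    by (rule sum.cong) (auto simp: Done_def zero_prod_def[symmetric] sigmaF_one sigmaF_zero)
  also have "\<dots> = P n" using f by (auto simp: supp_def)
  finally show "Dmult P Done n = P n" .
qed

lemma Dmult_distrib_left:
  assumes "P \<in> Dcar" "Q \<in> Dcar" "R \<in> Dcar"
  shows "Dmult R (\<lambda>d. P d + Q d) = (\<lambda>d. Dmult R P d + Dmult R Q d)"
proof
  fix n
  have f: "finite (supp R)" using assms by (simp add: Dcar_iff)
  show "Dmult R (\<lambda>d. P d + Q d) n = Dmult R P n + Dmult R Q n"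
    by (simp add: Dmult_eq sigmaF_add distrib_left sum.distrib)
qed

lemma Dmult_distrib_right:
  assumes "P \<in> Dcar" "Q \<in> Dcar" "R \<in> Dcar"
  shows "Dmult (\<lambda>d. P d + Q d) R = (\<lambda>d. Dmult P R d + Dmult Q R d)"
proof
  fix n
  define A where "A = supp P \<union> supp Q"
  have fA: "finite A" using assms by (simp add: Dcar_iff A_def)
  have s: "supp (\<lambda>d. P d + Q d) \<subseteq> A" by (auto simp: A_def supp_def)
  show "Dmult (\<lambda>d. P d + Q d) R n = Dmult P R n + Dmult Q R n"
    by (simp add: Dmult_superset[OF fA s] Dmult_superset[OF fA] A_def distrib_right sum.distrib)
qed



lemma rconst_Fract': "rconst c = Fract (sng 0 c) 1" by (rule rconst_Fract)

lemma rconst_mult: "rconst (a * b) = rconst a * rconst b"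
  by (simp add: rconst_Fract mult_single)

lemma rconst_one: "rconst 1 = 1"
  by (simp add: rconst_Fract One_fract_def)

lemma rconst_power: "rconst (c ^ n) = rconst c ^ n"
  by (induction n) (simp_all add: rconst_one rconst_mult)

lemma rconst_eq1: "(rconst c :: 'v::linorder ratfun) = 1 \<Longrightarrow> c = 1"
proof -
  assume "(rconst c :: 'v::linorder ratfun) = 1"
  then have "sng 0 c = (sng 0 1 :: 'v laurent)" by (simp add: rconst_Fract One_fract_def eq_fract)
  then have "lk (sng 0 c :: 'v laurent) 0 = lk (sng 0 1 :: 'v laurent) 0" by simp
  then show "c = 1" by simp
qed

lemma rconst2_powi:
  assumes "(rconst 2 :: 'v::linorder ratfun) powi k = 1" shows "k = 0"
proof (rule ccontr)
  assume k: "k \<noteq> 0"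
  define n where "n = nat \<bar>k\<bar>"
  have n: "n \<noteq> 0" using k by (simp add: n_def)
  have "(rconst 2 :: 'v ratfun) ^ n = 1"
  proof (cases "k \<ge> 0")
    case True then show ?thesis using assms by (simp add: power_int_def n_def)
  next
    case False
    then have "inverse ((rconst 2 :: 'v ratfun) ^ n) = 1" using assms
      by (simp add: power_int_def n_def power_inverse)
    then show ?thesis by (metis inverse_1 inverse_inverse_eq)
  qed
  then have "(rconst (2 ^ n) :: 'v ratfun) = 1" by (simp add: rconst_power)
  then have "(2::complex) ^ n = 1" by (rule rconst_eq1)
  then have "(of_nat (2 ^ n) :: complex) = of_nat 1" by simp
  then have "(2::nat) ^ n = 1" by (simp only: of_nat_eq_iff)
  then show False using n by simp
qed

definition DI :: "(int \<times> int \<Rightarrow> Dfield) set" where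
  "DI = {P \<in> Dcar. \<forall>d. P d \<noteq> 0 \<longrightarrow> fst d + snd d = 0}"

lemma carrier_Dinv: "carrier Dinv = DI"
proof -
  have "(\<forall>c. c \<noteq> 0 \<longrightarrow> Cact c P = P) \<longleftrightarrow> (\<forall>d. P d \<noteq> 0 \<longrightarrow> fst d + snd d = 0)" for P
  proof
    assume h: "\<forall>c. c \<noteq> 0 \<longrightarrow> Cact c P = P"
    show "\<forall>d. P d \<noteq> 0 \<longrightarrow> fst d + snd d = 0"
    proof (intro allI impI)
      fix d assume d: "P d \<noteq> 0"
      have "Cact 2 P d = P d" using h by simp
      then have "rconst 2 powi (fst d + snd d) * P d = 1 * P d" by (simp add: Cact_def)
      then have "rconst 2 powi (fst d + snd d) = (1 :: Dfield)" by (simp only: mult_right_cancel[OF d])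
      then show "fst d + snd d = 0" by (rule rconst2_powi)
    qed
  next
    assume h: "\<forall>d. P d \<noteq> 0 \<longrightarrow> fst d + snd d = 0"
    show "\<forall>c. c \<noteq> 0 \<longrightarrow> Cact c P = P"
    proof (intro allI impI ext)
      fix c :: complex and d
      show "Cact c P d = P d" using h[rule_format, of d] by (cases "P d = 0") (auto simp: Cact_def)
    qed
  qed
  then show ?thesis by (auto simp: Dinv_def Dring_def DI_def)
qed

lemma Dinv_simps [simp]:
  "mult Dinv = Dmult" "one Dinv = Done" "zero Dinv = (\<lambda>d. 0)" "add Dinv = (\<lambda>P Q d. P d + Q d)"
  by (simp_all add: Dinv_def Dring_def Done_def)

lemma DI_Dcar: "P \<in> DI \<Longrightarrow> P \<in> Dcar" by (simp add: DI_def)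

lemma DI_supp: "P \<in> DI \<Longrightarrow> d \<in> supp P \<Longrightarrow> snd d = - fst d"
proof -
  assume P: "P \<in> DI" and d: "d \<in> supp P"
  have "\<forall>d. P d \<noteq> 0 \<longrightarrow> fst d + snd d = 0" using P unfolding DI_def by blast
  then have "fst d + snd d = 0" using d unfolding supp_def by blast
  then show ?thesis by linarith
qed

lemma DI_mult: "P \<in> DI \<Longrightarrow> Q \<in> DI \<Longrightarrow> Dmult P Q \<in> DI"
proof -
  assume P: "P \<in> DI" and Q: "Q \<in> DI"
  have fP: "finite (supp P)" using P by (simp add: DI_def Dcar_iff)
  have "fst n + snd n = 0" if "Dmult P Q n \<noteq> 0" for n
  proof -
    have "n \<in> psum (supp P) (supp Q)" using supp_Dmult[OF fP] that by (auto simp: supp_def)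
    then obtain a b where "a \<in> supp P" "b \<in> supp Q" "n = a + b" by (auto simp: psum_def)
    then show ?thesis using DI_supp[OF P] DI_supp[OF Q] by auto
  qed
  then show ?thesis using Dmult_closed[OF DI_Dcar[OF P] DI_Dcar[OF Q]] unfolding DI_def by blast
qed

lemma DI_add: "P \<in> DI \<Longrightarrow> Q \<in> DI \<Longrightarrow> (\<lambda>d. P d + Q d) \<in> DI"
proof -
  assume P: "P \<in> DI" and Q: "Q \<in> DI"
  have "finite (supp (\<lambda>d. P d + Q d))"
    using P Q by (auto simp: DI_def Dcar_iff supp_def intro: finite_subset[of _ "supp P \<union> supp Q"])
  moreover have "P d + Q d \<in> KS" for d using P Q unfolding DI_def Dcar_def by (blast intro: KS_add)
  moreover have "fst d + snd d = 0" if "P d + Q d \<noteq> 0" for d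
  proof -
    have "\<forall>d. P d \<noteq> 0 \<longrightarrow> fst d + snd d = 0" "\<forall>d. Q d \<noteq> 0 \<longrightarrow> fst d + snd d = 0"
      using P Q unfolding DI_def by blast+
    then show ?thesis using that by (cases "P d = 0") auto
  qed
  ultimately show ?thesis unfolding DI_def Dcar_iff by blast
qed

lemma DI_uminus: "P \<in> DI \<Longrightarrow> (\<lambda>d. - P d) \<in> DI"
  by (auto simp: DI_def Dcar_def KS_uminus)

lemma DI_zero: "(\<lambda>d. 0) \<in> DI"
  by (auto simp: DI_def Dcar_def KS_zero)

lemma DI_one: "Done \<in> DI"
proof -
  have "Done d \<in> KS" for d by (simp add: Done_def KS_zero KS_one)
  moreover have "Done d \<noteq> 0 \<Longrightarrow> fst d + snd d = 0" for d by (cases d) (auto simp: Done_def split: if_splits)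
  moreover have "finite (supp Done)" by (simp add: supp_Done)
  ultimately show ?thesis unfolding DI_def Dcar_iff by blast
qed

lemma ring_Dinv: "ring Dinv"
proof (rule ringI)
  show "abelian_group Dinv"
    by (rule abelian_groupI)
       (auto simp: carrier_Dinv DI_add DI_zero add.assoc add.commute
             intro!: bexI[of _ "\<lambda>d. - _ d"] DI_uminus)
  show "monoid Dinv"
    by (rule monoidI)
       (auto simp: carrier_Dinv DI_mult DI_one Dmult_assoc DI_Dcar Dmult_one_left Dmult_one_right)
qed (auto simp: carrier_Dinv DI_Dcar Dmult_distrib_left Dmult_distrib_right)

lemma carrier_EndT: "carrier EndT = {f. (\<forall>a b. f (a + b) = f a + f b) \<and> (\<forall>c a. f (rconst c * a) = rconst c * f a)}"
  by (simp add: EndT_def)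

lemma EndT_simps [simp]:
  "mult EndT = (\<circ>)" "one EndT = id" "zero EndT = (\<lambda>a. 0)" "add EndT = (\<lambda>f g a. f a + g a)"
  by (simp_all add: EndT_def)

lemma EndT_add_zero: "f \<in> carrier EndT \<Longrightarrow> f 0 = 0"
proof -
  assume "f \<in> carrier EndT"
  then have "f (0 + 0) = f 0 + f 0" unfolding carrier_EndT by blast
  then have "f 0 = f 0 + f 0" by (simp only: add_0)
  then show "f 0 = 0" by (metis add_cancel_right_right)
qed

lemma ring_EndT: "ring EndT"
proof (rule ringI)
  show "abelian_group EndT"
  proof (rule abelian_groupI)
    fix x assume x: "x \<in> carrier EndT"
    show "\<exists>y\<in>carrier EndT. y \<oplus>\<^bsub>EndT\<^esub> x = \<zero>\<^bsub>EndT\<^esub>"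
    proof (rule bexI[of _ "\<lambda>a. - x a"])
      show "(\<lambda>a. - x a) \<in> carrier EndT" using x by (simp add: carrier_EndT)
    qed simp
  qed (auto simp: carrier_EndT algebra_simps)
  show "monoid EndT"
    by (rule monoidI) (auto simp: carrier_EndT)
qed (auto simp: carrier_EndT fun_eq_iff)



lemma evF_zero: "evF 0 = 0" and evF_one: "evF 1 = 1"
  by (simp_all add: evF_def fextR_zero fextR_one lhom_evL)

lemma evF_add: "x \<in> KS \<Longrightarrow> y \<in> KS \<Longrightarrow> evF (x + y) = evF x + evF y"
  by (simp add: evF_def fdom_add(2)[OF lhom_evL] KS_fdom)

lemma evF_mult: "x \<in> KS \<Longrightarrow> y \<in> KS \<Longrightarrow> evF (x * y) = evF x * evF y"
  by (simp add: evF_def fdom_mult(2)[OF lhom_evL] KS_fdom)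

lemma evF_uminus: "x \<in> KS \<Longrightarrow> evF (- x) = - evF x"
  by (simp add: evF_def fdom_uminus(2)[OF lhom_evL] KS_fdom)

lemma evF_sum: "(\<And>x. x \<in> S \<Longrightarrow> f x \<in> KS) \<Longrightarrow> evF (sum f S) = (\<Sum>x\<in>S. evF (f x))"
proof (induction S rule: infinite_finite_induct)
  case (insert x F)
  then show ?case by (simp add: evF_add KS_sum)
qed (simp_all add: evF_zero)

lemma evF_sigma_KS:
  assumes "x \<in> KS" "snd d = - fst d"
  shows "evF (sigmaF d x) = Wk (2 * fst d) (evF x)"
proof -
  have "d = (fst d, - fst d)" using assms(2) by (simp add: prod_eq_iff)
  then show ?thesis using evF_sigmaF(2)[OF KS_fdom[OF assms(1)], of "fst d"] by metis
qed

definition cc :: "int \<Rightarrow> Tfield" where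
  "cc n = rvar TS powi (-8 * n^2) * rvar TX powi (-4 * n)"

lemma cc_tm: "cc n = tm (sng TS (-8 * n^2) + sng TX (-4 * n))"
  by (simp add: cc_def rvar_tm tm_powi tm_add)

lemma cc_nz: "cc n \<noteq> 0"
  by (simp add: cc_tm tm_nz)

lemma cc_0: "cc 0 = 1"
  by (simp add: cc_def)

lemma cc_add: "cc (a + b) = cc a * Wk (2 * a) (cc b)"
proof -
  have "sng TS (-8 * (a + b)^2) + sng TX (-4 * (a + b))
      = sng TS (-8 * a^2) + sng TX (-4 * a) + shK (2 * a) (sng TS (-8 * b^2) + sng TX (-4 * b))"
    by (rule poly_mapping_eqI)
       (simp add: lk_shK lookup_add lookup_single when_def power2_eq_square algebra_simps)
  then have "cc (a + b) = tm (sng TS (-8 * a^2) + sng TX (-4 * a) + shK (2 * a) (sng TS (-8 * b^2) + sng TX (-4 * b)))"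
    by (simp only: cc_tm)
  also have "\<dots> = tm (sng TS (-8 * a^2) + sng TX (-4 * a)) * tm (shK (2 * a) (sng TS (-8 * b^2) + sng TX (-4 * b)))"
    by (rule tm_add)
  also have "\<dots> = cc a * Wk (2 * a) (cc b)" by (simp only: cc_tm Wk_tm)
  finally show ?thesis .
qed

lemma Wk_rconst_mult: "Wk k (rconst c * a) = rconst c * Wk k a"
  by (simp add: Wk_mult Wk_rconst)

definition Phi :: "(int \<times> int \<Rightarrow> Dfield) \<Rightarrow> Tfield \<Rightarrow> Tfield" where
  "Phi P = (\<lambda>f. \<Sum>d\<in>supp P. evF (P d) * cc (fst d) * Wk (2 * fst d) f)"

lemma Phi_superset:
  assumes "finite A" "supp P \<subseteq> A"
  shows "Phi P f = (\<Sum>d\<in>A. evF (P d) * cc (fst d) * Wk (2 * fst d) f)"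
  unfolding Phi_def
  by (rule sum.mono_neutral_left) (use assms in \<open>auto simp: supp_def evF_zero\<close>)

lemma DI_KS: "P \<in> DI \<Longrightarrow> P d \<in> KS"
  unfolding DI_def Dcar_def by blast

lemma DI_fin: "P \<in> DI \<Longrightarrow> finite (supp P)"
  unfolding DI_def Dcar_iff by blast

lemma Phi_add:
  assumes P: "P \<in> DI" and Q: "Q \<in> DI"
  shows "Phi (\<lambda>d. P d + Q d) f = Phi P f + Phi Q f"
proof -
  define A where "A = supp P \<union> supp Q"
  have fA: "finite A" using DI_fin[OF P] DI_fin[OF Q] by (simp add: A_def)
  have s: "supp (\<lambda>d. P d + Q d) \<subseteq> A" by (auto simp: A_def supp_def)
  show ?thesis
    by (simp add: Phi_superset[OF fA s] Phi_superset[OF fA] A_def evF_add DI_KS P Q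
                  distrib_right sum.distrib)
qed

lemma Phi_carrier:
  assumes "P \<in> DI" shows "Phi P \<in> carrier EndT"
proof -
  have "Phi P (a + b) = Phi P a + Phi P b" for a b
    by (simp add: Phi_def Wk_add distrib_left sum.distrib)
  moreover have "Phi P (rconst c * a) = rconst c * Phi P a" for c a
    by (simp add: Phi_def Wk_mult Wk_rconst sum_distrib_left mult_ac)
  ultimately show ?thesis unfolding carrier_EndT by blast
qed

lemma Phi_one: "Phi Done = id"
proof
  fix f show "Phi Done f = id f"
    by (simp add: Phi_def supp_Done) (simp add: Done_def zero_prod_def[symmetric] evF_one cc_0 Wk_0)
qed

lemma Phi_mult:
  assumes P: "P \<in> DI" and Q: "Q \<in> DI"
  shows "Phi (Dmult P Q) f = Phi P (Phi Q f)"
proof -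
  define A where "A = supp P"
  define B where "B = supp Q"
  define C where "C = psum A B"
  have fA: "finite A" and fB: "finite B" using P Q by (auto simp: DI_fin A_def B_def)
  have fC: "finite C" using fA fB by (simp add: C_def finite_psum)
  have sPQ: "supp (Dmult P Q) \<subseteq> C" using supp_Dmult fA by (simp add: A_def B_def C_def)
  have snd: "\<And>d. d \<in> A \<Longrightarrow> snd d = - fst d" "\<And>d. d \<in> B \<Longrightarrow> snd d = - fst d"
    using DI_supp P Q by (auto simp: A_def B_def)
  let ?T = "\<lambda>d e. evF (P d) * Wk (2 * fst d) (evF (Q e)) * cc (fst d + fst e) * Wk (2 * (fst d + fst e)) f"
  have "Phi (Dmult P Q) f = (\<Sum>n\<in>C. evF (Dmult P Q n) * cc (fst n) * Wk (2 * fst n) f)"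
    by (rule Phi_superset[OF fC sPQ])
  also have "\<dots> = (\<Sum>n\<in>C. \<Sum>d\<in>A. evF (P d) * Wk (2 * fst d) (evF (Q (n - d))) * cc (fst n) * Wk (2 * fst n) f)"
  proof (rule sum.cong[OF refl])
    fix n
    have "Dmult P Q n = (\<Sum>d\<in>A. P d * sigmaF d (Q (n - d)))"
      by (rule Dmult_superset[OF fA]) (simp add: A_def)
    then have "evF (Dmult P Q n) = (\<Sum>d\<in>A. evF (P d * sigmaF d (Q (n - d))))"
      by (simp add: evF_sum KS_mult KS_sigma DI_KS P Q)
    also have "\<dots> = (\<Sum>d\<in>A. evF (P d) * Wk (2 * fst d) (evF (Q (n - d))))"
      by (rule sum.cong[OF refl])
         (simp add: evF_mult DI_KS P Q KS_sigma evF_sigma_KS snd)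
    finally show "evF (Dmult P Q n) * cc (fst n) * Wk (2 * fst n) f =
        (\<Sum>d\<in>A. evF (P d) * Wk (2 * fst d) (evF (Q (n - d))) * cc (fst n) * Wk (2 * fst n) f)"
      by (simp add: sum_distrib_right)
  qed
  also have "\<dots> = (\<Sum>d\<in>A. \<Sum>n\<in>C. evF (P d) * Wk (2 * fst d) (evF (Q (n - d))) * cc (fst n) * Wk (2 * fst n) f)"
    by (rule sum.swap)
  also have "\<dots> = (\<Sum>d\<in>A. \<Sum>e\<in>B. ?T d e)"
  proof (rule sum.cong[OF refl])
    fix d assume d: "d \<in> A"
    have sub: "(\<lambda>e'. d + e') ` B \<subseteq> C" using d by (auto simp: C_def intro: psumI)
    have "(\<Sum>n\<in>C. evF (P d) * Wk (2 * fst d) (evF (Q (n - d))) * cc (fst n) * Wk (2 * fst n) f)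
        = (\<Sum>n\<in>(\<lambda>e'. d + e') ` B. evF (P d) * Wk (2 * fst d) (evF (Q (n - d))) * cc (fst n) * Wk (2 * fst n) f)"
    proof (rule sum.mono_neutral_right[OF fC sub], rule ballI)
      fix e assume "e \<in> C - (\<lambda>e'. d + e') ` B"
      then have "e - d \<notin> B" by (metis DiffD2 add.commute diff_add_cancel image_eqI)
      then have "Q (e - d) = 0" by (simp add: B_def supp_def)
      then show "evF (P d) * Wk (2 * fst d) (evF (Q (e - d))) * cc (fst e) * Wk (2 * fst e) f = 0"
        by (simp add: evF_zero Wk_zero)
    qed
    also have "\<dots> = (\<Sum>e\<in>B. ?T d e)"
      by (subst sum.reindex) (auto simp: inj_on_def)
    finally show "(\<Sum>n\<in>C. evF (P d) * Wk (2 * fst d) (evF (Q (n - d))) * cc (fst n) * Wk (2 * fst n) f)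
        = (\<Sum>e\<in>B. ?T d e)" .
  qed
  also have "\<dots> = (\<Sum>d\<in>A. evF (P d) * cc (fst d) * Wk (2 * fst d) (Phi Q f))"
  proof (rule sum.cong[OF refl])
    fix d
    have Teq: "?T d e = evF (P d) * cc (fst d) * Wk (2 * fst d) (evF (Q e) * cc (fst e) * Wk (2 * fst e) f)" for e
      by (simp add: Wk_mult Wk_comp cc_add distrib_left mult_ac)
    have "(\<Sum>e\<in>B. ?T d e) = (\<Sum>e\<in>B. evF (P d) * cc (fst d) * Wk (2 * fst d) (evF (Q e) * cc (fst e) * Wk (2 * fst e) f))"
      by (rule sum.cong[OF refl]) (rule Teq)
    also have "\<dots> = evF (P d) * cc (fst d) * Wk (2 * fst d) (\<Sum>e\<in>B. evF (Q e) * cc (fst e) * Wk (2 * fst e) f)"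
      by (simp add: Wk_sum sum_distrib_left)
    also have "\<dots> = evF (P d) * cc (fst d) * Wk (2 * fst d) (Phi Q f)"
      by (simp add: Phi_superset[OF fB] B_def)
    finally show "(\<Sum>e\<in>B. ?T d e) = evF (P d) * cc (fst d) * Wk (2 * fst d) (Phi Q f)" .
  qed
  also have "\<dots> = Phi P (Phi Q f)"
    by (simp add: Phi_superset[OF fA] A_def)
  finally show ?thesis .
qed

lemma Phi_hom: "Phi \<in> ring_hom Dinv EndT"
  by (rule ring_hom_memI)
     (auto simp: carrier_Dinv Phi_carrier Phi_one Phi_mult Phi_add DI_mult fun_eq_iff)

lemma Phi_hom_ring: "ring_hom_ring Dinv EndT Phi"
  by (rule ring_hom_ringI2[OF ring_Dinv ring_EndT Phi_hom])



definition r1 :: "dvar laurent" where "r1 = lvar Z11 * lvar Z12 - 1"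
definition r2 :: "dvar laurent" where "r2 = lvar Z21 * lvar Z22 - 1"
definition r3 :: "dvar laurent" where "r3 = lvar W1 * lvar W2 - 1"

definition LI :: "dvar laurent set" where
  "LI = {g1 * r1 + g2 * r2 + g3 * r3 | g1 g2 g3. True}"

lemma LI_add: "p \<in> LI \<Longrightarrow> q \<in> LI \<Longrightarrow> p + q \<in> LI"
proof -
  assume "p \<in> LI" "q \<in> LI"
  then obtain a1 a2 a3 b1 b2 b3 where "p = a1 * r1 + a2 * r2 + a3 * r3" "q = b1 * r1 + b2 * r2 + b3 * r3"
    by (auto simp: LI_def)
  then have "p + q = (a1 + b1) * r1 + (a2 + b2) * r2 + (a3 + b3) * r3" by (simp add: algebra_simps)
  then show ?thesis by (auto simp: LI_def)
qed

lemma LI_mult: "p \<in> LI \<Longrightarrow> c * p \<in> LI"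
proof -
  assume "p \<in> LI"
  then obtain a1 a2 a3 where "p = a1 * r1 + a2 * r2 + a3 * r3" by (auto simp: LI_def)
  then have "c * p = (c * a1) * r1 + (c * a2) * r2 + (c * a3) * r3" by (simp add: algebra_simps)
  then show ?thesis by (auto simp: LI_def)
qed

lemma LI_zero: "0 \<in> LI"
  unfolding LI_def by (auto intro!: exI[of _ 0])

lemma LI_sum: "(\<And>x. x \<in> S \<Longrightarrow> f x \<in> LI) \<Longrightarrow> sum f S \<in> LI"
  by (induction S rule: infinite_finite_induct) (auto simp: LI_zero LI_add)

lemma LI_r1: "g * r1 \<in> LI"
proof -
  have "g * r1 = (if 1 = (1::nat) then g else 0) * r1 + (if 1 = (2::nat) then g else 0) * r2 + (if 1 = (3::nat) then g else 0) * r3" by simp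
  then show ?thesis unfolding LI_def by blast
qed
lemma LI_r2: "g * r2 \<in> LI"
proof -
  have "g * r2 = (if 2 = (1::nat) then g else 0) * r1 + (if 2 = (2::nat) then g else 0) * r2 + (if 2 = (3::nat) then g else 0) * r3" by simp
  then show ?thesis unfolding LI_def by blast
qed
lemma LI_r3: "g * r3 \<in> LI"
proof -
  have "g * r3 = (if 3 = (1::nat) then g else 0) * r1 + (if 3 = (2::nat) then g else 0) * r2 + (if 3 = (3::nat) then g else 0) * r3" by simp
  then show ?thesis unfolding LI_def by blast
qed

lemma int_pow_ideal:
  fixes m :: "int \<Rightarrow> 'a::comm_ring_1"
  assumes madd: "\<And>a b. m (a + b) = m a * m b" and m0: "m 0 = 1"
  shows "\<exists>g. m k - 1 = g * (m 1 - 1)"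
proof (induction k rule: int_induct[where k = 0])
  case base
  then show ?case using m0 by (auto intro!: exI[of _ 0])
next
  case (step1 i)
  then obtain g where g: "m i - 1 = g * (m 1 - 1)" by blast
  have "m (i + 1) - 1 = m i * (m 1 - 1) + (m i - 1)" by (simp add: madd algebra_simps)
  also have "\<dots> = (m i + g) * (m 1 - 1)" unfolding g by (simp add: algebra_simps)
  finally have "m (i + 1) - 1 = (m i + g) * (m 1 - 1)" .
  then show ?case by blast
next
  case (step2 i)
  then obtain g where g: "m i - 1 = g * (m 1 - 1)" by blast
  have mi: "m i = m (i - 1) * m 1" using madd[of "i - 1" 1] by simp
  have "m (i - 1) - 1 = (m i - 1) - m (i - 1) * (m 1 - 1)" by (simp add: mi algebra_simps)
  also have "\<dots> = (g - m (i - 1)) * (m 1 - 1)" unfolding g by (simp add: algebra_simps)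
  finally have "m (i - 1) - 1 = (g - m (i - 1)) * (m 1 - 1)" .
  then show ?case by blast
qed

definition M1 :: "int \<Rightarrow> dvar laurent" where "M1 k = sng (sng Z11 k + sng Z12 k) 1"
definition M2 :: "int \<Rightarrow> dvar laurent" where "M2 k = sng (sng Z21 k + sng Z22 k) 1"
definition M3 :: "int \<Rightarrow> dvar laurent" where "M3 k = sng (sng W1 k + sng W2 k) 1"

lemma M1_LI: "M1 k - 1 \<in> LI"
proof -
  have "\<exists>g. M1 k - 1 = g * (M1 1 - 1)"
    by (rule int_pow_ideal) (simp_all add: M1_def mult_single single_add add_ac)
  moreover have "M1 1 - 1 = r1" by (simp add: M1_def r1_def lvar_sng mult_single)
  ultimately show ?thesis using LI_r1 by auto
qed

lemma M2_LI: "M2 k - 1 \<in> LI"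
proof -
  have "\<exists>g. M2 k - 1 = g * (M2 1 - 1)"
    by (rule int_pow_ideal) (simp_all add: M2_def mult_single single_add add_ac)
  moreover have "M2 1 - 1 = r2" by (simp add: M2_def r2_def lvar_sng mult_single)
  ultimately show ?thesis using LI_r2 by auto
qed

lemma M3_LI: "M3 k - 1 \<in> LI"
proof -
  have "\<exists>g. M3 k - 1 = g * (M3 1 - 1)"
    by (rule int_pow_ideal) (simp_all add: M3_def mult_single single_add add_ac)
  moreover have "M3 1 - 1 = r3" by (simp add: M3_def r3_def lvar_sng mult_single)
  ultimately show ?thesis using LI_r3 by auto
qed

lemma mono_rho_LI: "sng e c - sng (rho e) c \<in> LI"
proof -
  define k1 k2 k3 where "k1 = lk e Z12" "k2 = lk e Z22" "k3 = lk e W2"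
  have ee: "e = rho e + ((sng Z11 k1 + sng Z12 k1) + (sng Z21 k2 + sng Z22 k2) + (sng W1 k3 + sng W2 k3))"
    by (rule poly_mapping_eqI)
       (simp add: k1_k2_k3_def lk_rho lookup_add lookup_single when_def split: dvar.split)
  have "sng e c = sng (rho e) c * (M1 k1 * M2 k2 * M3 k3)"
    by (subst ee) (simp add: M1_def M2_def M3_def mult_single)
  then have "sng e c - sng (rho e) c = sng (rho e) c * (M1 k1 * M2 k2 * M3 k3 - 1)"
    by (simp add: algebra_simps)
  also have "M1 k1 * M2 k2 * M3 k3 - 1 = (M2 k2 * M3 k3) * (M1 k1 - 1) + M3 k3 * (M2 k2 - 1) + (M3 k3 - 1)"
    by (simp add: algebra_simps)
  finally show ?thesis
    by (simp only:) (intro LI_mult LI_add M1_LI M2_LI M3_LI)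
qed

lemma diff_rhoL_LI: "a - rhoL a \<in> LI"
proof -
  have "a - rhoL a = (\<Sum>e\<in>kys a. sng e (lk a e) - sng (rho e) (lk a e))"
    by (subst (1) laurent_repr[of a]) (simp add: Lmap_def sum_subtractf)
  then show ?thesis by (simp add: LI_sum mono_rho_LI)
qed

lemma keys_Lmap: "kys (Lmap \<kappa> p) \<subseteq> \<kappa> ` kys p"
proof
  fix x assume x: "x \<in> kys (Lmap \<kappa> p)"
  show "x \<in> \<kappa> ` kys p"
  proof (rule ccontr)
    assume "x \<notin> \<kappa> ` kys p"
    then have "lk (Lmap \<kappa> p) x = 0" unfolding lookup_Lmap by (intro sum.neutral) auto
    then show False using x by (simp add: in_keys_iff)
  qed
qed

lemma evL_rhoL: "evL (rhoL a) = evL a"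
proof -
  have "kap \<circ> rho = kap" by (rule ext) (simp add: kap_rho)
  then show ?thesis by (simp add: Lmap_comp)
qed

lemma evL_kernel:
  assumes "evL a = 0" shows "a \<in> LI"
proof -
  define q where "q = rhoL a"
  have kq: "kys q \<subseteq> range rho" using keys_Lmap[of rho a] by (auto simp: q_def)
  have "q = 0"
  proof (rule ccontr)
    assume "q \<noteq> 0"
    then obtain e where e: "e \<in> kys q" by (metis keys_eq_empty all_not_in_conv)
    then have er: "rho e = e" using kq rho_rho by auto
    have "lk (evL q) (kap e) = (\<Sum>e'\<in>kys q. if kap e' = kap e then lk q e' else 0)"
      by (rule lookup_Lmap)
    also have "\<dots> = (\<Sum>e'\<in>kys q. if e' = e then lk q e' else 0)"
    proof (rule sum.cong[OF refl])
      fix e' assume "e' \<in> kys q"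
      then have er': "rho e' = e'" using kq rho_rho by auto
      have "kap e' = kap e \<longleftrightarrow> e' = e"
        using kap_inj_rho[of e' e] er er' by auto
      then show "(if kap e' = kap e then lk q e' else 0) = (if e' = e then lk q e' else 0)" by simp
    qed
    also have "\<dots> = lk q e" using e by simp
    finally have "lk (evL q) (kap e) = lk q e" .
    moreover have "evL q = 0" using assms by (simp add: q_def evL_rhoL)
    ultimately show False using e by (simp add: in_keys_iff)
  qed
  then have "a = a - rhoL a" by (simp add: q_def)
  then show ?thesis using diff_rhoL_LI by metis
qed



definition sterm :: "int \<times> int \<Rightarrow> Dfield \<Rightarrow> (int \<times> int \<Rightarrow> Dfield)" where
  "sterm d x = (\<lambda>d'. if d' = d then x else 0)"

lemma deg0_sterm: "deg0 x = sterm 0 x"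
  by (simp add: deg0_def sterm_def zero_prod_def)

lemma supp_sterm: "supp (sterm d x) \<subseteq> {d}"
  by (auto simp: supp_def sterm_def)

lemma sterm_DI: "x \<in> KS \<Longrightarrow> snd d = - fst d \<Longrightarrow> sterm d x \<in> DI"
proof -
  assume x: "x \<in> KS" and d: "snd d = - fst d"
  have "finite (supp (sterm d x))" using supp_sterm finite_subset by blast
  moreover have "sterm d x d' \<in> KS" for d' using x by (simp add: sterm_def KS_zero)
  moreover have "sterm d x d' \<noteq> 0 \<Longrightarrow> fst d' + snd d' = 0" for d'
    using d by (simp add: sterm_def split: if_splits)
  ultimately show ?thesis unfolding DI_def Dcar_iff by blast
qed

lemma deg0_DI: "x \<in> KS \<Longrightarrow> deg0 x \<in> DI"
  by (simp add: deg0_sterm sterm_DI)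

lemma Dmult_deg0:
  "Dmult (deg0 x) Q = (\<lambda>n. x * Q n)"
proof
  fix n
  have "Dmult (deg0 x) Q n = (\<Sum>d\<in>{0}. deg0 x d * sigmaF d (Q (n - d)))"
    by (rule Dmult_superset) (use supp_sterm in \<open>auto simp: deg0_sterm\<close>)
  then show "Dmult (deg0 x) Q n = x * Q n"
    by (simp add: deg0_sterm sterm_def sigmaF_0)
qed

lemma Dmult_deg0_sterm: "Dmult (deg0 x) (sterm d y) = sterm d (x * y)"
  by (auto simp: Dmult_deg0 sterm_def)

lemma Dmult_deg0_deg0: "Dmult (deg0 x) (deg0 y) = deg0 (x * y)"
  by (simp add: Dmult_deg0_sterm deg0_sterm[of y] deg0_sterm[of "x * y"])

lemma deg0_add: "deg0 (x + y) = (\<lambda>d. deg0 x d + deg0 y d)"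
  by (auto simp: deg0_def)

lemma Phi_sterm: "Phi (sterm d x) f = evF x * cc (fst d) * Wk (2 * fst d) f"
proof -
  have "Phi (sterm d x) f = (\<Sum>d'\<in>{d}. evF (sterm d x d') * cc (fst d') * Wk (2 * fst d') f)"
    by (rule Phi_superset) (simp_all add: supp_sterm)
  then show ?thesis by (simp add: sterm_def)
qed

lemma Phi_deg0: "Phi (deg0 x) = mulop (evF x)"
  by (rule ext) (simp add: deg0_sterm Phi_sterm cc_0 Wk_0 mulop_def)

definition Jgens :: "(int \<times> int \<Rightarrow> Dfield) set" where
  "Jgens = {deg0 (rvar Z11 * rvar Z12 - 1), deg0 (rvar Z21 * rvar Z22 - 1), deg0 (rvar W1 * rvar W2 - 1)}"

lemma rvar_Fract: "rvar v = Fract (lvar v) 1" by (simp add: rvar_def)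

lemma gens_Fract:
  "rvar Z11 * rvar Z12 - 1 = Fract r1 1" "rvar Z21 * rvar Z22 - 1 = Fract r2 1"
  "rvar W1 * rvar W2 - 1 = Fract r3 1"
  by (simp_all add: rvar_Fract r1_def r2_def r3_def One_fract_def)

lemma Jgens_carrier: "Jgens \<subseteq> carrier Dinv"
  by (auto simp: Jgens_def carrier_Dinv gens_Fract intro!: deg0_DI KS_Fract1)

lemma Jideal_eq: "Jideal = genideal Dinv Jgens"
  by (simp add: Jideal_def Jgens_def)

lemma ideal_J: "ideal Jideal Dinv"
  unfolding Jideal_eq by (rule ring.genideal_ideal[OF ring_Dinv Jgens_carrier])

lemma Jgens_J: "Jgens \<subseteq> Jideal"
  unfolding Jideal_eq by (rule ring.genideal_self[OF ring_Dinv Jgens_carrier])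

lemma evL_lvar: "evL (lvar v) = sng (kap (sng v 1)) 1"
  by (simp add: lvar_sng)

lemma evL_r: "evL r1 = 0" "evL r2 = 0" "evL r3 = 0"
proof -
  have k1: "kap (sng Z11 1) + kap (sng Z12 1) = 0"
    by (rule poly_mapping_eqI) (simp add: lk_kap lookup_add lookup_single split: tvar.split)
  have k2: "kap (sng Z21 1) + kap (sng Z22 1) = 0"
    by (rule poly_mapping_eqI) (simp add: lk_kap lookup_add lookup_single split: tvar.split)
  have k3: "kap (sng W1 1) + kap (sng W2 1) = 0"
    by (rule poly_mapping_eqI) (simp add: lk_kap lookup_add lookup_single split: tvar.split)
  show "evL r1 = 0" "evL r2 = 0" "evL r3 = 0"
    by (simp_all add: r1_def r2_def r3_def lhom_hom_simps[OF lhom_evL] evL_lvar mult_single k1 k2 k3)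
qed

lemma J_sub_kernel: "Jideal \<subseteq> a_kernel Dinv EndT Phi"
proof -
  have "Jgens \<subseteq> a_kernel Dinv EndT Phi"
  proof
    fix x assume x: "x \<in> Jgens"
    then have xc: "x \<in> carrier Dinv" using Jgens_carrier by blast
    have "Phi x = (\<lambda>a. 0)" using x
      by (auto simp: Jgens_def gens_Fract Phi_deg0 evF_Fract1 evL_r mulop_def Zero_fract_def[symmetric])
    then show "x \<in> a_kernel Dinv EndT Phi" using xc by (simp add: a_kernel_def kernel_def)
  qed
  then show ?thesis unfolding Jideal_eq
    by (rule ring.genideal_minimal[OF ring_Dinv ring_hom_ring.kernel_is_ideal[OF Phi_hom_ring]])
qed

lemma J_add: "a \<in> Jideal \<Longrightarrow> b \<in> Jideal \<Longrightarrow> (\<lambda>d. a d + b d) \<in> Jideal"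
  using additive_subgroup.a_closed[OF ideal.axioms(1)[OF ideal_J], of a b] by simp

lemma J_lmult: "a \<in> Jideal \<Longrightarrow> x \<in> DI \<Longrightarrow> Dmult x a \<in> Jideal"
  using ideal.I_l_closed[OF ideal_J, of a x] by (simp add: carrier_Dinv)

lemma J_rmult: "a \<in> Jideal \<Longrightarrow> x \<in> DI \<Longrightarrow> Dmult a x \<in> Jideal"
  using ideal.I_r_closed[OF ideal_J, of a x] by (simp add: carrier_Dinv)

lemma evF_kernel:
  assumes x: "x \<in> KS" and ev: "evF x = 0"
  shows "deg0 x \<in> Jideal"
proof -
  obtain a b where ab: "b \<in> Smult" "x = Fract a b" using x by (rule KSE)
  have "Fract (evL a) (evL b) = 0" using ev ab by (simp add: evF_Fract Smult_nz Smult_ev)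
  then have "evL a = 0" using Smult_ev[OF ab(1)] by (simp add: Zero_fract_def eq_fract)
  then have "a \<in> LI" by (rule evL_kernel)
  then obtain g1 g2 g3 where g: "a = g1 * r1 + g2 * r2 + g3 * r3" by (auto simp: LI_def)
  have bnz: "b \<noteq> 0" using Smult_nz[OF ab(1)] .
  have sameb: "Fract p b + Fract q b = Fract (p + q) b" for p q
    using bnz by (simp add: eq_fract algebra_simps)
  have mf: "Fract g b * Fract r 1 = Fract (g * r) b" for g r by simp
  have xe: "x = Fract g1 b * Fract r1 1 + Fract g2 b * Fract r2 1 + Fract g3 b * Fract r3 1"
    unfolding mf sameb using ab g by simp
  have G: "deg0 (Fract r1 1) \<in> Jideal" "deg0 (Fract r2 1) \<in> Jideal" "deg0 (Fract r3 1) \<in> Jideal"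
    using Jgens_J by (auto simp: Jgens_def gens_Fract)
  have K: "deg0 (Fract g b) \<in> DI" for g using ab by (simp add: deg0_DI KSI)
  have "deg0 x = (\<lambda>d. (\<lambda>d. Dmult (deg0 (Fract g1 b)) (deg0 (Fract r1 1)) d
                        + Dmult (deg0 (Fract g2 b)) (deg0 (Fract r2 1)) d) d
                   + Dmult (deg0 (Fract g3 b)) (deg0 (Fract r3 1)) d)"
    unfolding xe by (simp add: Dmult_deg0_deg0 deg0_add)
  also have "\<dots> \<in> Jideal"
    by (intro J_add J_lmult G K)
  finally show ?thesis .
qed

lemma DI_induct:
  assumes P: "P \<in> DI"
    and zero: "Pr (\<lambda>d. 0)"
    and step: "\<And>Q d x. Q \<in> DI \<Longrightarrow> x \<in> KS \<Longrightarrow> snd d = - fst d \<Longrightarrow> Pr Q \<Longrightarrow> Pr (\<lambda>n. Q n + sterm d x n)"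
  shows "Pr P"
proof -
  have "\<forall>P. P \<in> DI \<longrightarrow> supp P = F \<longrightarrow> Pr P" if "finite F" for F
    using that
  proof (induction F rule: finite_induct)
    case empty
    then show ?case
    proof (intro allI impI)
      fix P assume "P \<in> DI" "supp P = {}"
      then have "P = (\<lambda>d. 0)" by (auto simp: supp_def)
      then show "Pr P" using zero by simp
    qed
  next
    case (insert d F)
    show ?case
    proof (intro allI impI)
      fix P assume P: "P \<in> DI" and s: "supp P = insert d F"
      define Q where "Q = (\<lambda>n. if n = d then 0 else P n)"
      have sQ: "supp Q = F" using s insert(2) by (auto simp: supp_def Q_def)
      have Q: "Q \<in> DI"
      proof -
        have "finite (supp Q)" using sQ insert(1) by simp
        moreover have "Q n \<in> KS" for n using DI_KS[OF P] by (simp add: Q_def KS_zero)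
        moreover have "Q n \<noteq> 0 \<Longrightarrow> fst n + snd n = 0" for n
          using DI_supp[OF P, of n] by (auto simp: Q_def supp_def split: if_splits)
        ultimately show ?thesis unfolding DI_def Dcar_iff by blast
      qed
      have dd: "snd d = - fst d" using DI_supp[OF P, of d] s by auto
      have "P = (\<lambda>n. Q n + sterm d (P d) n)" by (auto simp: Q_def sterm_def)
      moreover have "Pr (\<lambda>n. Q n + sterm d (P d) n)"
        using step[OF Q DI_KS[OF P] dd] insert(3) Q sQ by blast
      ultimately show "Pr P" by simp
    qed
  qed
  then show ?thesis using P DI_fin[OF P] by blast
qed

lemma vdm:
  fixes y b :: "'i \<Rightarrow> 'a::field"
  assumes "finite S" "inj_on y S" "\<And>j::nat. (\<Sum>i\<in>S. b i * y i ^ j) = 0"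
  shows "\<forall>i\<in>S. b i = 0"
  using assms
proof (induction S arbitrary: b rule: finite_induct)
  case empty
  then show ?case by simp
next
  case (insert m F)
  have injF: "inj_on y F" using insert(4) by (simp add: inj_on_insert)
  have ym: "y i \<noteq> y m" if "i \<in> F" for i using insert(2,4) that by (auto simp: inj_on_def)
  have "(\<Sum>i\<in>F. (b i * (y i - y m)) * y i ^ j) = 0" for j
  proof -
    have "(\<Sum>i\<in>F. (b i * (y i - y m)) * y i ^ j)
        = (\<Sum>i\<in>insert m F. b i * y i ^ Suc j) - y m * (\<Sum>i\<in>insert m F. b i * y i ^ j)"
      using insert(1,2)
      by (simp add: sum_distrib_left sum_subtractf[symmetric] algebra_simps)
    moreover have A1: "(\<Sum>i\<in>insert m F. b i * y i ^ Suc j) = 0" by (rule insert(5))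
    moreover have A0: "(\<Sum>i\<in>insert m F. b i * y i ^ j) = 0" by (rule insert(5))
    ultimately show ?thesis by (simp only: mult_zero_right diff_zero)
  qed
  then have "\<forall>i\<in>F. b i * (y i - y m) = 0" by (rule insert(3)[OF injF])
  then have bF: "\<forall>i\<in>F. b i = 0" using ym by auto
  have "(\<Sum>i\<in>insert m F. b i * y i ^ 0) = 0" by (rule insert(5))
  then have "b m = 0" using insert(1,2) bF by simp
  then show ?case using bF by simp
qed

lemma Wk_tmX: "Wk (2 * n) (tm (sng TX (int j))) = tm (sng TX (int j)) * tm (sng TS (4 * n)) ^ j"
proof -
  have "shK (2 * n) (sng TX (int j)) = sng TX (int j) + sng TS (int j * (4 * n))"
    by (rule poly_mapping_eqI) (simp add: lk_shK lookup_add lookup_single when_def)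
  then show ?thesis by (simp add: Wk_tm tm_add tm_pow)
qed

lemma kernel_sub_J:
  assumes x: "x \<in> DI" and z: "Phi x = (\<lambda>a. 0)"
  shows "x \<in> Jideal"
proof -
  define S where "S = supp x"
  have fS: "finite S" using DI_fin[OF x] by (simp add: S_def)
  define y where "y d = tm (sng TS (4 * fst d))" for d :: "int \<times> int"
  define b where "b d = evF (x d) * cc (fst d)" for d
  have inj: "inj_on y S"
  proof (rule inj_onI)
    fix d d' assume d: "d \<in> S" "d' \<in> S" and e: "y d = y d'"
    then have "sng TS (4 * fst d) = sng TS (4 * fst d')" by (simp add: y_def tm_inj)
    then have "lk (sng TS (4 * fst d)) TS = lk (sng TS (4 * fst d')) TS" by simp
    then have "fst d = fst d'" by simp
    moreover have "snd d = - fst d" "snd d' = - fst d'" using DI_supp[OF x] d by (auto simp: S_def)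
    ultimately show "d = d'" by (simp add: prod_eq_iff)
  qed
  have "(\<Sum>d\<in>S. b d * y d ^ j) = 0" for j :: nat
  proof -
    have "0 = Phi x (tm (sng TX (int j)))" using z by simp
    also have "\<dots> = (\<Sum>d\<in>S. evF (x d) * cc (fst d) * (tm (sng TX (int j)) * y d ^ j))"
      by (simp add: Phi_def S_def Wk_tmX y_def)
    also have "\<dots> = tm (sng TX (int j)) * (\<Sum>d\<in>S. b d * y d ^ j)"
      by (simp add: b_def sum_distrib_left mult_ac)
    finally show ?thesis using tm_nz by simp
  qed
  then have "\<forall>d\<in>S. b d = 0" using vdm[OF fS inj] by blast
  then have ev0: "\<forall>d\<in>S. evF (x d) = 0" using cc_nz by (simp add: b_def)
  have "finite F \<Longrightarrow> F \<subseteq> S \<Longrightarrow> (\<lambda>n. if n \<in> F then x n else 0) \<in> Jideal" for F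
  proof (induction F rule: finite_induct)
    case empty
    then show ?case
      using additive_subgroup.zero_closed[OF ideal.axioms(1)[OF ideal_J]] by simp
  next
    case (insert d F)
    have dS: "d \<in> S" using insert(4) by simp
    have dd: "snd d = - fst d" using DI_supp[OF x] dS by (simp add: S_def)
    have "deg0 (x d) \<in> Jideal" using evF_kernel[OF DI_KS[OF x]] ev0 dS by simp
    then have "Dmult (deg0 (x d)) (sterm d 1) \<in> Jideal"
      by (rule J_rmult) (simp add: sterm_DI KS_one dd)
    then have st: "sterm d (x d) \<in> Jideal" by (simp add: Dmult_deg0_sterm)
    have "(\<lambda>n. if n \<in> insert d F then x n else 0) = (\<lambda>n. (\<lambda>n. if n \<in> F then x n else 0) n + sterm d (x d) n)"
      using insert(2) by (auto simp: sterm_def)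
    also have "\<dots> \<in> Jideal" using insert(3,4) st by (intro J_add) auto
    finally show ?case .
  qed
  from this[OF fS] have "(\<lambda>n. if n \<in> S then x n else 0) \<in> Jideal" by simp
  moreover have "(\<lambda>n. if n \<in> S then x n else 0) = x" by (auto simp: S_def supp_def)
  ultimately show ?thesis by simp
qed



lemma kernel_eq: "a_kernel Dinv EndT Phi = Jideal"
proof
  show "a_kernel Dinv EndT Phi \<subseteq> Jideal"
  proof
    fix x assume "x \<in> a_kernel Dinv EndT Phi"
    then have "x \<in> DI" "Phi x = (\<lambda>a. 0)" by (auto simp: a_kernel_def kernel_def carrier_Dinv)
    then show "x \<in> Jideal" by (rule kernel_sub_J)
  qed
  show "Jideal \<subseteq> a_kernel Dinv EndT Phi" by (rule J_sub_kernel)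
qed

lemma Qring_eq: "Qring = Dinv Quot (a_kernel Dinv EndT Phi)"
  by (simp add: Qring_def kernel_eq)

lemma cls_eq: "cls x = a_kernel Dinv EndT Phi +>\<^bsub>Dinv\<^esub> x"
  by (simp add: cls_def kernel_eq)

definition phi :: "(int \<times> int \<Rightarrow> Dfield) set \<Rightarrow> Tfield \<Rightarrow> Tfield" where
  "phi X = the_elem (Phi ` X)"

lemma phi_cls: "x \<in> DI \<Longrightarrow> phi (cls x) = Phi x"
  unfolding phi_def cls_eq
  by (rule ring_hom_ring.the_elem_simp[OF Phi_hom_ring]) (simp add: carrier_Dinv)

lemma phi_hom: "phi \<in> ring_hom Qring EndT"
  unfolding Qring_eq phi_def[abs_def] by (rule ring_hom_ring.the_elem_hom[OF Phi_hom_ring])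

lemma phi_inj: "inj_on phi (carrier Qring)"
  unfolding Qring_eq phi_def[abs_def]
  by (rule inj_onI) (rule ring_hom_ring.the_elem_inj[OF Phi_hom_ring])

lemma kap_vars:
  "kap (sng DS 1) = sng TS 1" "kap (sng Z11 1) = sng T4 1" "kap (sng Z12 1) = - sng T4 1"
  "kap (sng Z21 1) = sng T1 1" "kap (sng Z22 1) = - sng T1 1" "kap (sng Za 1) = sng T3 1"
  "kap (sng Zb 1) = sng T2 1" "kap (sng W1 1) = sng TX 1" "kap (sng W2 1) = - sng TX 1"
  by (rule poly_mapping_eqI; simp add: lk_kap lookup_single lookup_uminus when_def split: tvar.split)+

lemma evF_rvar: "evF (rvar v) = tm (kap (sng v 1))"
  by (simp add: rvar_Fract evF_Fract1 evL_lvar tm_def)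

lemma evF_rconst: "evF (rconst c) = rconst c"
proof -
  have "kap 0 = 0" by (simp add: kap_def)
  then show ?thesis by (simp add: rconst_Fract evF_Fract1)
qed

lemma rvar_KS: "rvar v \<in> KS" by (simp add: rvar_Fract KS_Fract1)
lemma rconst_KS: "rconst c \<in> KS" by (simp add: rconst_Fract KS_Fract1)

definition En :: "int \<Rightarrow> (int \<times> int \<Rightarrow> Dfield)" where
  "En n = sterm (n, - n) 1"

lemma En_DI: "En n \<in> DI" by (simp add: En_def sterm_DI KS_one)

lemma Eop_En: "Eop = En 1"
  by (auto simp: Eop_def En_def sterm_def)

lemma Phi_En: "Phi (En n) f = cc n * Wk (2 * n) f"
  by (simp add: En_def Phi_sterm evF_one)

lemma phi_assignment: "assignment phi"
proof -
  have d: "\<And>x. x \<in> KS \<Longrightarrow> phi (cls (deg0 x)) = mulop (evF x)"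
    by (simp add: phi_cls deg0_DI Phi_deg0)
  have tmi: "tm (- sng v 1) = inverse (rvar v)" for v by (simp add: tm_uminus rvar_tm)
  have E: "phi (cls Eop) = (\<lambda>f. rvar TS powi (-8) * rvar TX powi (-4) * varpi (varpi f))"
    by (rule ext) (simp add: Eop_En phi_cls En_DI Phi_En cc_def varpi_eq Wk_comp)
  show ?thesis unfolding assignment_def
    by (simp add: d rvar_KS rconst_KS evF_rvar evF_rconst kap_vars rvar_tm[symmetric] tmi E)
qed

lemma Dmult_sterm: "Dmult (sterm d x) (sterm e y) = sterm (d + e) (x * sigmaF d y)"
proof
  fix n
  have "Dmult (sterm d x) (sterm e y) n = (\<Sum>d'\<in>{d}. sterm d x d' * sigmaF d' (sterm e y (n - d')))"
    by (rule Dmult_superset) (simp_all add: supp_sterm)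
  also have "\<dots> = sterm (d + e) (x * sigmaF d y) n"
    by (auto simp: sterm_def sigmaF_zero)
  finally show "Dmult (sterm d x) (sterm e y) n = sterm (d + e) (x * sigmaF d y) n" .
qed

lemma En_add: "Dmult (En a) (En b) = En (a + b)"
  by (simp add: En_def Dmult_sterm sigmaF_one)

lemma En_0: "En 0 = Done"
  by (auto simp: En_def sterm_def Done_def)

lemma deg0_one: "deg0 1 = Done"
  by (simp add: deg0_def Done_def)

lemma sterm_split: "snd d = - fst d \<Longrightarrow> sterm d v = Dmult (deg0 v) (En (fst d))"
proof -
  assume h: "snd d = - fst d"
  then have d: "(fst d, - fst d) = d" by (simp add: prod_eq_iff)
  show ?thesis by (simp add: Dmult_deg0_sterm En_def d)
qed

lemma sng_add1: "sng (a + b) (1::complex) = sng a 1 * sng b 1"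
  by (simp add: mult_single)

lemma sng_sum_prod:
  fixes g :: "'c \<Rightarrow> dexp"
  shows "finite S \<Longrightarrow> (sng (sum g S) 1 :: dvar laurent) = (\<Prod>v\<in>S. sng (g v) 1)"
  by (induction S rule: finite_induct) (simp_all add: sng_add1)

lemma test1: "sng (\<Sum>v\<in>kys (e::dexp). sng v (lk e v)) (1::complex) = (\<Prod>v\<in>kys e. sng (sng v (lk e v)) 1)"
  by (rule sng_sum_prod) simp

lemma Fract_mult1: "Fract (a * b) 1 = Fract a 1 * Fract b 1" by simp
lemma Fract_add1: "Fract (a + b) 1 = Fract a 1 + Fract b 1" by simp

lemma Fract_prod: "Fract (prod f S) 1 = (\<Prod>i\<in>S. Fract (f i) 1)"
  by (induction S rule: infinite_finite_induct) (simp_all add: One_fract_def Fract_mult1)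

lemma Fract_sum: "Fract (sum f S) 1 = (\<Sum>i\<in>S. Fract (f i) 1)"
  by (induction S rule: infinite_finite_induct) (simp_all add: Zero_fract_def Fract_add1)

lemma uniqueness:
  assumes psi: "psi \<in> ring_hom Qring EndT" and asg: "assignment psi"
  shows "\<forall>X\<in>carrier Qring. psi X = phi X"
proof -
  define h where "h x = psi (cls x)" for x
  have clsh: "cls \<in> ring_hom Dinv Qring"
  proof -
    have "cls = (+>\<^bsub>Dinv\<^esub>) Jideal" by (rule ext) (simp add: cls_def)
    then show ?thesis using ideal.rcos_ring_hom[OF ideal_J] by (simp add: Qring_def)
  qed
  have hh: "h \<in> ring_hom Dinv EndT"
    using ring_hom_trans[OF clsh psi] by (simp add: h_def[abs_def] o_def)
  have h_mult: "h (Dmult x y) = h x \<circ> h y" if "x \<in> DI" "y \<in> DI" for x y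
    using ring_hom_mult[OF hh, of x y] that by (simp add: carrier_Dinv)
  have h_add: "h (\<lambda>d. x d + y d) = (\<lambda>a. h x a + h y a)" if "x \<in> DI" "y \<in> DI" for x y
    using ring_hom_add[OF hh, of x y] that by (simp add: carrier_Dinv)
  have h_one: "h Done = id" using ring_hom_one[OF hh] by simp
  have h_zero: "h (\<lambda>d. 0) = (\<lambda>a. 0)" using ring_hom_zero[OF hh ring_Dinv ring_EndT] by simp
  define Ag where "Ag = {x \<in> DI. h x = Phi x}"
  have Ag_mult: "Dmult x y \<in> Ag" if "x \<in> Ag" "y \<in> Ag" for x y
    using that by (auto simp: Ag_def DI_mult h_mult Phi_mult fun_eq_iff)
  have Ag_add: "(\<lambda>d. x d + y d) \<in> Ag" if "x \<in> Ag" "y \<in> Ag" for x y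
    using that by (auto simp: Ag_def DI_add h_add Phi_add fun_eq_iff)
  have Ag_one: "Done \<in> Ag" by (simp add: Ag_def DI_one h_one Phi_one)
  have Ag_zero: "(\<lambda>d. 0) \<in> Ag" by (simp add: Ag_def DI_zero h_zero Phi_def supp_def)
  have Ag_inv: "y \<in> Ag" if x: "x \<in> Ag" and y: "y \<in> DI" and xy: "Dmult x y = Done" and yx: "Dmult y x = Done" for x y
  proof -
    have xD: "x \<in> DI" and hx: "h x = Phi x" using x by (auto simp: Ag_def)
    have c1: "Phi x \<circ> Phi y = Phi Done"
    proof -
      have "Phi x \<circ> Phi y = Phi (Dmult x y)" by (rule ext) (simp add: Phi_mult[OF xD y])
      then show ?thesis by (simp only: xy)
    qed
    have c2: "h y \<circ> h x = id"
    proof -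
      have "h y \<circ> h x = h (Dmult y x)" by (simp add: h_mult[OF y xD])
      then show ?thesis by (simp only: yx h_one)
    qed
    have "h y = h y \<circ> Phi Done" by (simp add: Phi_one)
    also have "\<dots> = h y \<circ> (Phi x \<circ> Phi y)" by (simp only: c1)
    also have "\<dots> = (h y \<circ> h x) \<circ> Phi y" by (simp add: hx o_assoc)
    also have "\<dots> = Phi y" by (simp add: c2)
    finally show ?thesis using y by (simp add: Ag_def)
  qed
  have gen: "deg0 x \<in> Ag" if "x \<in> KS" "psi (cls (deg0 x)) = phi (cls (deg0 x))" for x
    using that by (simp add: Ag_def deg0_DI h_def phi_cls)
  have A: "psi (cls (deg0 (rvar v))) = phi (cls (deg0 (rvar v)))" for v
    using asg phi_assignment unfolding assignment_def by (cases v) simp_all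
  have Av: "deg0 (rvar v) \<in> Ag" for v using gen[OF rvar_KS A] .
  have Ac: "deg0 (rconst c) \<in> Ag" for c
    using gen[OF rconst_KS] asg phi_assignment unfolding assignment_def by simp
  have AE1: "En 1 \<in> Ag"
  proof -
    have "psi (cls Eop) = phi (cls Eop)" using asg phi_assignment unfolding assignment_def by simp
    then show ?thesis by (simp add: Ag_def En_DI h_def phi_cls Eop_En)
  qed
  have AEm1: "En (-1) \<in> Ag"
    by (rule Ag_inv[OF AE1 En_DI]) (simp_all add: En_add En_0)
  have AE: "En n \<in> Ag" for n
  proof (induction n rule: int_induct[where k = 0])
    case base then show ?case by (simp add: En_0 Ag_one)
  next
    case (step1 i)
    then show ?case using Ag_mult[OF step1(2) AE1] by (simp add: En_add)
  next
    case (step2 i)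
    then show ?case using Ag_mult[OF step2(2) AEm1] by (simp add: En_add)
  qed
  have deg0_mult: "deg0 (x * y) \<in> Ag" if "deg0 x \<in> Ag" "deg0 y \<in> Ag" for x y
    using Ag_mult[OF that] by (simp add: Dmult_deg0_deg0)
  have deg0_addA: "deg0 (x + y) \<in> Ag" if "deg0 x \<in> Ag" "deg0 y \<in> Ag" for x y
    using Ag_add[OF that] by (simp add: deg0_add)
  have deg0_inv: "deg0 y \<in> Ag" if "deg0 x \<in> Ag" "y \<in> KS" "x * y = 1" for x y
  proof (rule Ag_inv[OF that(1) deg0_DI[OF that(2)]])
    show "Dmult (deg0 x) (deg0 y) = Done" using that by (simp add: Dmult_deg0_deg0 deg0_one)
    show "Dmult (deg0 y) (deg0 x) = Done" using that by (simp add: Dmult_deg0_deg0 deg0_one mult.commute)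
  qed
  have deg0_sum: "deg0 (sum f S) \<in> Ag" if "\<And>i. i \<in> S \<Longrightarrow> deg0 (f i) \<in> Ag" for f :: "'i \<Rightarrow> Dfield" and S
    using that
  proof (induction S rule: infinite_finite_induct)
    case (infinite A) then show ?case using Ag_zero by (simp add: deg0_def)
  next
    case empty then show ?case using Ag_zero by (simp add: deg0_def)
  next
    case (insert i F) then show ?case by (simp add: deg0_addA)
  qed
  have deg0_prod: "deg0 (prod f S) \<in> Ag" if "\<And>i. i \<in> S \<Longrightarrow> deg0 (f i) \<in> Ag" for f :: "'i \<Rightarrow> Dfield" and S
    using that
  proof (induction S rule: infinite_finite_induct)
    case (infinite A) then show ?case using Ag_one by (simp add: deg0_one)
  next
    case empty then show ?case using Ag_one by (simp add: deg0_one)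
  next
    case (insert i F) then show ?case by (simp add: deg0_mult)
  qed
  have monpos: "deg0 (Fract (sng (sng v (int n)) 1) 1) \<in> Ag" for v n
  proof (induction n)
    case 0
    have "Fract (sng (sng v (int 0)) 1) 1 = (1 :: Dfield)" by (simp add: One_fract_def)
    then show ?case using Ag_one by (simp add: deg0_one)
  next
    case (Suc n)
    have "Fract (sng (sng v (int (Suc n))) 1) 1 = Fract (sng (sng v (int n)) 1) 1 * rvar v"
      by (simp add: rvar_Fract lvar_sng mult_single single_add[symmetric] add.commute)
    then show ?case using deg0_mult[OF Suc Av] by simp
  qed
  have monv: "deg0 (Fract (sng (sng v k) 1) 1) \<in> Ag" for v k
  proof (cases "k \<ge> 0")
    case True then show ?thesis using monpos[of v "nat k"] by simp
  next
    case False
    have "Fract (sng (sng v (- k)) 1) 1 * Fract (sng (sng v k) 1) 1 = 1"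
      by (simp add: mult_single single_add[symmetric] One_fract_def)
    then show ?thesis using deg0_inv[OF monpos[of v "nat (- k)"] KS_Fract1] False by simp
  qed
  have monS: "finite S \<Longrightarrow> deg0 (Fract (sng (\<Sum>v\<in>S. sng v (f v)) 1) 1) \<in> Ag"
    for S :: "dvar set" and f :: "dvar \<Rightarrow> int"
  proof (induction S rule: finite_induct)
    case empty
    have "Fract (sng (\<Sum>v\<in>{}. sng v (f v)) 1) 1 = (1 :: Dfield)" by (simp add: One_fract_def)
    then show ?case using Ag_one by (simp add: deg0_one)
  next
    case (insert x F)
    have eq: "Fract (sng (\<Sum>v\<in>insert x F. sng v (f v)) 1) 1
        = (Fract (sng (sng x (f x)) 1) 1 * Fract (sng (\<Sum>v\<in>F. sng v (f v)) 1) 1 :: Dfield)"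
      using insert(1,2) by (simp add: sng_add1)
    show ?case by (simp only: eq) (rule deg0_mult[OF monv insert(3)])
  qed
  have mon: "deg0 (Fract (sng e 1) 1) \<in> Ag" for e :: dexp
  proof -
    have "deg0 (Fract (sng (\<Sum>v\<in>kys e. sng v (lk e v)) 1) 1) \<in> Ag"
      by (rule monS) simp
    then show ?thesis using laurent_repr[of e, symmetric] by simp
  qed
  have lpoly: "deg0 (Fract p 1) \<in> Ag" for p :: "dvar laurent"
  proof -
    have "Fract p 1 = (\<Sum>e\<in>kys p. rconst (lk p e) * Fract (sng e 1) 1)"
      by (subst laurent_repr[of p]) (simp add: Fract_sum rconst_Fract mult_single)
    then show ?thesis by (simp add: deg0_sum deg0_mult Ac mon)
  qed
  have KSAg: "deg0 x \<in> Ag" if xK: "x \<in> KS" for x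
  proof -
    obtain a b where ab: "b \<in> Smult" "x = Fract a b" using xK by (rule KSE)
    have bnz: "b \<noteq> 0" by (rule Smult_nz[OF ab(1)])
    have "Fract b 1 * Fract 1 b = 1" using bnz by (simp add: One_fract_def eq_fract)
    then have i: "deg0 (Fract 1 b) \<in> Ag" using deg0_inv[OF lpoly KSI[OF ab(1)]] by simp
    have "x = Fract a 1 * Fract 1 b" using ab bnz by simp
    then show ?thesis using deg0_mult[OF lpoly i] by simp
  qed
  have allAg: "x \<in> Ag" if "x \<in> DI" for x
  proof (rule DI_induct[OF that, where Pr = "\<lambda>x. x \<in> Ag"])
    show "(\<lambda>d. 0) \<in> Ag" by (rule Ag_zero)
  next
    fix Q and d :: "int \<times> int" and v assume st: "Q \<in> DI" "v \<in> KS" "snd d = - fst d" "Q \<in> Ag"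
    have "sterm d v \<in> Ag" using st(2,3) by (simp add: sterm_split Ag_mult KSAg AE)
    then show "(\<lambda>n. Q n + sterm d v n) \<in> Ag" using Ag_add[OF st(4)] by simp
  qed
  show ?thesis
  proof
    fix X assume "X \<in> carrier Qring"
    then obtain x where x: "x \<in> carrier Dinv" "X = cls x"
      using ring_hom_ring.quot_mem[OF Phi_hom_ring] by (auto simp: Qring_eq cls_eq)
    then have "x \<in> Ag" using allAg by (simp add: carrier_Dinv)
    then show "psi X = phi X" using x by (simp add: Ag_def h_def phi_cls)
  qed
qed


theorem lemma4p2:
  shows "\<exists>\<phi>. \<phi> \<in> ring_hom Qring EndT \<and> assignment \<phi> \<and> inj_on \<phi> (carrier Qring)
            \<and> (\<forall>\<psi>. \<psi> \<in> ring_hom Qring EndT \<and> assignment \<psi> \<longrightarrow>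
                   (\<forall>x\<in>carrier Qring. \<psi> x = \<phi> x))"
proof (intro exI[of _ phi] conjI allI impI)
  show "phi \<in> ring_hom Qring EndT" by (rule phi_hom)
  show "assignment phi" by (rule phi_assignment)
  show "inj_on phi (carrier Qring)" by (rule phi_inj)
  fix \<psi> assume "\<psi> \<in> ring_hom Qring EndT \<and> assignment \<psi>"
  then show "\<forall>x\<in>carrier Qring. \<psi> x = phi x" using uniqueness by blast
qed

end
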